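(* In the setting described in the context, fix any $\pi=(\pi_1,\dots,\pi_T)\in\Pi$ and for $\tilde\pi_t\in\Pi_t$ let $R_t^{\pi_{t:T}}(\tilde\pi_t)=V_t(\tilde\pi_t,\pi_{(t+1):T})-V_t(\pi_{t:T})$. Under sequential ignorability, the overlap condition (with constant $\eta$) and correct specification, $$R(\pi) \leq R_{1}^{\pi_{1:T}}(\pi_{1}^{*,B}) + \sum_{t=2}^{T} \frac{2^{t-2}}{\eta^{t-1}} R_{t}^{\pi_{t:T}}(\pi_{t}^{*,B}).$$
   Context: Fix $T\ge1$; $\mathcal{A}_t=\{0,\dots,d_t-1\}$; $\underline v_t=(v_1,\dots,v_t)$, $\underline{\mathcal{A}}_t=\mathcal{A}_1\times\cdots\times\mathcal{A}_t$. Potential outcomes $Y_t(\underline a_t)$, potential states $S_t(\underline a_{t-1})$; observed $A_t$, $S_t=S_t(\underline A_{t-1})$, $Y_t=Y_t(\underline A_t)$; potential history $H_t(\underline a_{t-1})=(\underline a_{t-1},S_1,S_2(\underline a_1),\dots,S_t(\underline a_{t-1}))$, observed $H_t=H_t(\underline A_{t-1})$ with support $\mathcal{H}_t$. $e_t(h_t,a_t)=\mathbb{P}(A_t=a_t\mid H_t=h_t)$. Stage-$t$ policies are measurable $\pi_t:\mathcal{H}_t\to\mathcal{A}_t$; class $\Pi=\Pi_1\times\cdots\times\Pi_T$, $\Pi_{s:t}=\Pi_s\times\cdots\times\Pi_t$, $\pi_{s:t}=(\pi_s,\dots,\pi_t)$. Welfare $W(\pi)=\mathbb{E}[\sum_t\sum_{\underline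 a_t}Y_t(\underline a_t)\prod_{s\le t}\mathbf{1}\{\pi_s(H_s(\underline a_{s-1}))=a_s\}]$, regret $R(\pi)=\max_{\tilde\pi\in\Pi}W(\tilde\pi)-W(\pi)$. Policy value $V_t(\pi_{t:T})=\mathbb{E}[\sum_{s=t}^T\sum_{\underline a_s}Y_s(\underline a_s)\mathbf{1}\{\underline A_{t-1}=\underline a_{t-1}\}\prod_{\ell=t}^s\mathbf{1}\{\pi_\ell(H_\ell(\underline a_{\ell-1}))=a_\ell\}]$ (indicator on $\underline A_0$ equal to 1). Q-functions: $Q_T(h_T,a_T)=\mathbb{E}[Y_T\mid H_T=h_T,A_T=a_T]$; for $t<T$, $Q_t^{\pi_{(t+1):T}}(h_t,a_t)=\mathbb{E}[Y_t+Q_{t+1}^{\pi_{(t+2):T}}(H_{t+1},\pi_{t+1}(H_{t+1}))\mid H_t=h_t,A_t=a_t]$ ($Q_T^{\pi_{(T+1):T}}=Q_T$). Backward induction: $\pi_T^{*,B}\in\arg\max_{\Pi_T}\mathbb{E}[Q_T(H_T,\pi_T(H_T))]$, $\pi_t^{*,B}\in\arg\max_{\Pi_t}\mathbb{E}[Q_t^{\pi^{*,B}_{(t+1):T}}(H_t,\pi_t(H_t))]$ for $t=T-1,\dots,1$. (Sequential ignorability) $\{Y_t(\underline a_t),\dots,Y_T(\underline a_T),S_{t+1}(\underline a_t),\dots,S_T(\underline a_{T-1})\}\perp A_t\mid H_t$ for all $t,\underline a_T$. (Overlap) $\eta\in(0,1)$ with $e_t(h_t,a_t)\ge\eta$ whenever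 $\pi_t(h_t)=a_t$ for some $\pi_t\in\Pi_t$. (Correct specification) There is $\pi^*_{2:T}\in\Pi_{2:T}$ with $Q_t^{\pi^*_{(t+1):T}}(H_t,\pi^*_t(H_t))\ge\sup_{\pi_t\in\Pi_t}Q_t^{\pi^*_{(t+1):T}}(H_t,\pi_t(H_t))$ a.s., $t=2,\dots,T$. *)

theory Defs
  imports "HOL-Probability.Probability"
begin

(* Histories: h_t = (list of past actions a_1..a_{t-1}, states S_1..S_t bs an
   extensional function on {1..t}). *)
type_synonym 'S hist = "nat list \<times> (nat \<Rightarrow> 'S)"

definition hist_space :: "'S measure \<Rightarrow> nat \<Rightarrow> 'S hist measure" where
  "hist_space SS t = count_space UNIV \<Otimes>\<^sub>M PiM {1..t} (\<lambda>_. SS)"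

definition act_seqs :: "(nat \<Rightarrow> nat) \<Rightarrow> nat \<Rightarrow> nat list set" where
  "act_seqs d t = {bs. length bs = t \<and> (\<forall>i<t. bs ! i < d (i + 1))}"

definition obs_acts :: "(nat \<Rightarrow> 'a \<Rightarrow> nat) \<Rightarrow> nat \<Rightarrow> 'a \<Rightarrow> nat list" where
  "obs_acts A t \<omega> = map (\<lambda>s. A s \<omega>) [1..<t+1]"

(* potential history H_t(bs), bs of length t-1 ; S s bs = S_s(bs) *)
definition pot_hist :: "(nat \<Rightarrow> nat list \<Rightarrow> 'a \<Rightarrow> 'S) \<Rightarrow> nat \<Rightarrow> nat list \<Rightarrow> 'a \<Rightarrow> 'S hist" where
  "pot_hist S t bs \<omega> = (bs, (\<lambda>s\<in>{1..t}. S s (take (s - 1) bs) \<omega>))"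

definition obs_hist :: "(nat \<Rightarrow> 'a \<Rightarrow> nat) \<Rightarrow> (nat \<Rightarrow> nat list \<Rightarrow> 'a \<Rightarrow> 'S) \<Rightarrow> nat \<Rightarrow> 'a \<Rightarrow> 'S hist" where
  "obs_hist A S t \<omega> = pot_hist S t (obs_acts A (t - 1) \<omega>) \<omega>"

definition obs_out :: "(nat \<Rightarrow> 'a \<Rightarrow> nat) \<Rightarrow> (nat \<Rightarrow> nat list \<Rightarrow> 'a \<Rightarrow> real) \<Rightarrow> nat \<Rightarrow> 'a \<Rightarrow> real" where
  "obs_out A Y t \<omega> = Y t (obs_acts A t \<omega>) \<omega>"

definition cexp_version :: "'a measure \<Rightarrow> 'b measure \<Rightarrow> ('a \<Rightarrow> 'b) \<Rightarrow> ('a \<Rightarrow> real) \<Rightarrow> ('b \<Rightarrow> real) \<Rightarrow> bool" where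
  "cexp_version M N Z X g \<longleftrightarrow>
     g \<in> borel_measurable N \<and> integrable M (\<lambda>\<omega>. g (Z \<omega>)) \<and>
     (\<forall>B\<in>sets N. (LINT \<omega>|M. indicator B (Z \<omega>) * g (Z \<omega>)) = (LINT \<omega>|M. indicator B (Z \<omega>) * X \<omega>))"

definition cond_indep :: "'a measure \<Rightarrow> 'b measure \<Rightarrow> ('a \<Rightarrow> 'b) \<Rightarrow> 'c measure \<Rightarrow> ('a \<Rightarrow> 'c)
    \<Rightarrow> 'd measure \<Rightarrow> ('a \<Rightarrow> 'd) \<Rightarrow> bool" where
  "cond_indep M MX X MW W MZ Z \<longleftrightarrow>
     (let F = vimage_algebra (space M) Z MZ in
      \<forall>B\<in>sets MX. \<forall>C\<in>sets MW.
        AE \<omega> in M. real_cond_exp M F (\<lambda>x. indicator B (X x) * indicator C (W x)) \<omega>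
                  = real_cond_exp M F (\<lambda>x. indicator B (X x)) \<omega> * real_cond_exp M F (\<lambda>x. indicator C (W x)) \<omega>)"

definition welfare :: "'a measure \<Rightarrow> nat \<Rightarrow> (nat \<Rightarrow> nat) \<Rightarrow> (nat \<Rightarrow> nat list \<Rightarrow> 'a \<Rightarrow> real)
    \<Rightarrow> (nat \<Rightarrow> nat list \<Rightarrow> 'a \<Rightarrow> 'S) \<Rightarrow> (nat \<Rightarrow> 'S hist \<Rightarrow> nat) \<Rightarrow> real" where
  "welfare M T d Y S pol = (LINT \<omega>|M. (\<Sum>t\<in>{1..T}. \<Sum>bs\<in>act_seqs d t.
      Y t bs \<omega> * (\<Prod>s\<in>{1..t}. if pol s (pot_hist S s (take (s - 1) bs) \<omega>) = bs ! (s - 1) then 1 else 0)))"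

definition regret :: "'a measure \<Rightarrow> nat \<Rightarrow> (nat \<Rightarrow> nat) \<Rightarrow> (nat \<Rightarrow> nat list \<Rightarrow> 'a \<Rightarrow> real)
    \<Rightarrow> (nat \<Rightarrow> nat list \<Rightarrow> 'a \<Rightarrow> 'S) \<Rightarrow> (nat \<Rightarrow> ('S hist \<Rightarrow> nat) set) \<Rightarrow> (nat \<Rightarrow> 'S hist \<Rightarrow> nat) \<Rightarrow> real" where
  "regret M T d Y S Pol pol =
     (SUP p\<in>{p. \<forall>t\<in>{1..T}. p t \<in> Pol t}. welfare M T d Y S p) - welfare M T d Y S pol"

definition pvalue :: "'a measure \<Rightarrow> nat \<Rightarrow> (nat \<Rightarrow> nat) \<Rightarrow> (nat \<Rightarrow> 'a \<Rightarrow> nat) \<Rightarrow> (nat \<Rightarrow> nat list \<Rightarrow> 'a \<Rightarrow> real)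
    \<Rightarrow> (nat \<Rightarrow> nat list \<Rightarrow> 'a \<Rightarrow> 'S) \<Rightarrow> (nat \<Rightarrow> 'S hist \<Rightarrow> nat) \<Rightarrow> nat \<Rightarrow> real" where
  "pvalue M T d A Y S pol t = (LINT \<omega>|M. (\<Sum>s\<in>{t..T}. \<Sum>bs\<in>act_seqs d s.
      Y s bs \<omega> * (if obs_acts A (t - 1) \<omega> = take (t - 1) bs then 1 else 0) *
      (\<Prod>l\<in>{t..s}. if pol l (pot_hist S l (take (l - 1) bs) \<omega>) = bs ! (l - 1) then 1 else 0)))"


definition stage_regret :: "'a measure \<Rightarrow> nat \<Rightarrow> (nat \<Rightarrow> nat) \<Rightarrow> (nat \<Rightarrow> 'a \<Rightarrow> nat) \<Rightarrow> (nat \<Rightarrow> nat list \<Rightarrow> 'a \<Rightarrow> real)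
    \<Rightarrow> (nat \<Rightarrow> nat list \<Rightarrow> 'a \<Rightarrow> 'S) \<Rightarrow> (nat \<Rightarrow> 'S hist \<Rightarrow> nat) \<Rightarrow> nat \<Rightarrow> ('S hist \<Rightarrow> nat) \<Rightarrow> real" where
  "stage_regret M T d A Y S pol t p = pvalue M T d A Y S (pol(t := p)) t - pvalue M T d A Y S pol t"

end

theory Submission
  imports Defs
begin


lemma integrable_bounded_mult:
  fixes f g :: "'a \<Rightarrow> real"
  assumes "integrable M g" "f \<in> borel_measurable M" "\<And>x. x \<in> space M \<Longrightarrow> \<bar>f x\<bar> \<le> K"
  shows "integrable M (\<lambda>x. f x * g x)"
proof (rule Bochner_Integration.integrable_bound[where f="\<lambda>x. K * g x"])
  show "integrable M (\<lambda>x. K * g x)" using assms(1) by simp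
  show "(\<lambda>x. f x * g x) \<in> borel_measurable M" using assms(1,2) by measurable
  have "K \<ge> 0" if "x \<in> space M" for x using assms(3)[OF that] by linarith
  then show "AE x in M. norm (f x * g x) \<le> norm (K * g x)"
    using assms(3) by (auto simp: abs_mult intro!: mult_right_mono)
qed

lemma sfs_vimage:
  assumes "prob_space M" "Z \<in> measurable M N"
  shows "sigma_finite_subalgebra M (vimage_algebra (space M) Z N)"
proof -
  have sub: "subalgebra M (vimage_algebra (space M) Z N)"
    unfolding subalgebra_def using assms(2)
    by (auto simp: sets_vimage_algebra2 measurable_def)
  have "finite_measure (restr_to_subalg M (vimage_algebra (space M) Z N))"
    by (rule finite_measure_restr_to_subalg[OF sub]) (use assms(1) prob_space_def in auto)
  then show ?thesis using sub
    by (simp add: finite_measure.axioms(1) sigma_finite_subalgebra.intro)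
qed

lemma cexp_rce:
  assumes P: "prob_space M" and Z: "Z \<in> measurable M N" and X: "integrable M X"
    and cv: "cexp_version M N Z X g"
  shows "AE \<omega> in M. real_cond_exp M (vimage_algebra (space M) Z N) X \<omega> = g (Z \<omega>)"
proof -
  interpret sigma_finite_subalgebra M "vimage_algebra (space M) Z N" by (rule sfs_vimage[OF P Z])
  have g: "g \<in> borel_measurable N" and gi: "integrable M (\<lambda>\<omega>. g (Z \<omega>))"
    and eq: "\<And>B. B \<in> sets N \<Longrightarrow> (LINT \<omega>|M. indicator B (Z \<omega>) * g (Z \<omega>)) = (LINT \<omega>|M. indicator B (Z \<omega>) * X \<omega>)"
    using cv unfolding cexp_version_def by auto
  have Zv: "Z \<in> measurable (vimage_algebra (space M) Z N) N"
    by (rule measurable_vimage_algebra1) (use Z in \<open>auto simp: measurable_def\<close>)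
  show ?thesis
  proof (rule real_cond_exp_charact)
    fix A assume "A \<in> sets (vimage_algebra (space M) Z N)"
    then obtain B where B: "B \<in> sets N" "A = Z -` B \<inter> space M"
      using Z by (auto simp: sets_vimage_algebra2 measurable_def)
    have "(\<integral>x\<in>A. X x \<partial>M) = (LINT \<omega>|M. indicator B (Z \<omega>) * X \<omega>)"
      unfolding set_lebesgue_integral_def B(2)
      by (rule Bochner_Integration.integral_cong) (auto simp: indicator_def)
    also have "\<dots> = (LINT \<omega>|M. indicator B (Z \<omega>) * g (Z \<omega>))" using eq[OF B(1)] by simp
    also have "\<dots> = (\<integral>x\<in>A. g (Z x) \<partial>M)"
      unfolding set_lebesgue_integral_def B(2)
      by (rule Bochner_Integration.integral_cong) (auto simp: indicator_def)
    finally show "(\<integral>x\<in>A. X x \<partial>M) = (\<integral>x\<in>A. g (Z x) \<partial>M)" .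
  next
    show "integrable M X" by fact
    show "integrable M (\<lambda>x. g (Z x))" by fact
    show "(\<lambda>x. g (Z x)) \<in> borel_measurable (vimage_algebra (space M) Z N)"
      using Zv g by measurable
  qed
qed

lemma cexp_bounded:
  assumes P: "prob_space M" and Z: "Z \<in> measurable M N" and X: "integrable M X"
    and cv: "cexp_version M N Z X g"
    and \<psi>: "\<psi> \<in> borel_measurable N" "\<And>x. x \<in> space N \<Longrightarrow> \<bar>\<psi> x\<bar> \<le> K"
  shows "(LINT \<omega>|M. \<psi> (Z \<omega>) * X \<omega>) = (LINT \<omega>|M. \<psi> (Z \<omega>) * g (Z \<omega>))"
proof -
  interpret sigma_finite_subalgebra M "vimage_algebra (space M) Z N" by (rule sfs_vimage[OF P Z])
  have Zv: "Z \<in> measurable (vimage_algebra (space M) Z N) N"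
    by (rule measurable_vimage_algebra1) (use Z in \<open>auto simp: measurable_def\<close>)
  have fm: "(\<lambda>\<omega>. \<psi> (Z \<omega>)) \<in> borel_measurable (vimage_algebra (space M) Z N)"
    using Zv \<psi>(1) by measurable
  have bnd: "\<And>x. x \<in> space M \<Longrightarrow> \<bar>\<psi> (Z x)\<bar> \<le> K" using \<psi>(2) Z by (auto simp: measurable_def)
  have "(LINT \<omega>|M. \<psi> (Z \<omega>) * X \<omega>) = (LINT \<omega>|M. \<psi> (Z \<omega>) * real_cond_exp M (vimage_algebra (space M) Z N) X \<omega>)"
    by (rule real_cond_exp_intg(2)[symmetric, OF integrable_bounded_mult[OF X _ bnd] fm])
       (use X Z \<psi>(1) in auto)
  also have "\<dots> = (LINT \<omega>|M. \<psi> (Z \<omega>) * g (Z \<omega>))"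
    by (rule integral_cong_AE) (use cexp_rce[OF P Z X cv] X Z \<psi>(1) cv[unfolded cexp_version_def] in \<open>auto intro!: measurable_from_subalg[OF subalg fm]\<close>)
  finally show ?thesis .
qed

lemma cexp_mono:
  assumes P: "prob_space M" and Z: "Z \<in> measurable M N" and X: "integrable M X1" "integrable M X2"
    and cv: "cexp_version M N Z X1 g1" "cexp_version M N Z X2 g2"
    and le: "AE \<omega> in M. X1 \<omega> \<le> X2 \<omega>"
  shows "AE \<omega> in M. g1 (Z \<omega>) \<le> g2 (Z \<omega>)"
proof -
  interpret sigma_finite_subalgebra M "vimage_algebra (space M) Z N" by (rule sfs_vimage[OF P Z])
  show ?thesis using real_cond_exp_mono[OF le X] cexp_rce[OF P Z X(1) cv(1)] cexp_rce[OF P Z X(2) cv(2)]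
    by eventually_elim auto
qed


declare upt_Suc[simp del]


locale dtr =

  fixes M :: "'a measure" and SS :: "'S measure" and T :: nat and d :: "nat \<Rightarrow> nat"
    and A :: "nat \<Rightarrow> 'a \<Rightarrow> nat"
    and S :: "nat \<Rightarrow> nat list \<Rightarrow> 'a \<Rightarrow> 'S"
    and Y :: "nat \<Rightarrow> nat list \<Rightarrow> 'a \<Rightarrow> real"
    and Pol :: "nat \<Rightarrow> ('S hist \<Rightarrow> nat) set"
    and e :: "nat \<Rightarrow> 'S hist \<Rightarrow> nat \<Rightarrow> real"
    and Q :: "nat \<Rightarrow> (nat \<Rightarrow> 'S hist \<Rightarrow> nat) \<Rightarrow> 'S hist \<times> nat \<Rightarrow> real"
    and \<eta> :: real
    and pol piB :: "nat \<Rightarrow> 'S hist \<Rightarrow> nat"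
  assumes M: "prob_space M"
    and T: "1 \<le> T"
    and A_meas: "\<forall>t\<in>{1..T}. A t \<in> measurable M (count_space UNIV) \<and> (\<forall>\<omega>\<in>space M. A t \<omega> < d t)"
    and S_meas: "\<forall>t\<in>{1..T}. \<forall>bs\<in>act_seqs d (t - 1). S t bs \<in> measurable M SS"
    and Y_int: "\<forall>t\<in>{1..T}. \<forall>bs\<in>act_seqs d t. integrable M (Y t bs)"
    and Pi_policies: "\<forall>t\<in>{1..T}. \<forall>p\<in>Pol t. p \<in> measurable (hist_space SS t) (count_space UNIV)
                        \<and> (\<forall>h\<in>space (hist_space SS t). p h < d t)"
    and seq_ign: "\<forall>t\<in>{1..T}. \<forall>a\<in>act_seqs d T.
        cond_indep M (PiM {t..T} (\<lambda>_. borel) \<Otimes>\<^sub>M PiM {Suc t..T} (\<lambda>_. SS))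
          (\<lambda>\<omega>. ((\<lambda>s\<in>{t..T}. Y s (take s a) \<omega>), (\<lambda>s\<in>{Suc t..T}. S s (take (s - 1) a) \<omega>)))
          (count_space UNIV) (A t) (hist_space SS t) (obs_hist A S t)"
    and e_version: "\<forall>t\<in>{1..T}. \<forall>a. cexp_version M (hist_space SS t) (obs_hist A S t)
                        (\<lambda>\<omega>. indicator {\<omega>. A t \<omega> = a} \<omega>) (\<lambda>h. e t h a)"
    and eta: "0 < \<eta>" "\<eta> < 1"
    and overlap: "\<forall>t\<in>{1..T}. \<forall>p\<in>Pol t. AE \<omega> in M. \<eta> \<le> e t (obs_hist A S t \<omega>) (p (obs_hist A S t \<omega>))"
    and Q_version: "\<forall>p. (\<forall>t\<in>{1..T}. p t \<in> Pol t) \<longrightarrow>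
        cexp_version M (hist_space SS T \<Otimes>\<^sub>M count_space UNIV) (\<lambda>\<omega>. (obs_hist A S T \<omega>, A T \<omega>))
          (obs_out A Y T) (Q T p) \<and>
        (\<forall>t\<in>{1..<T}. cexp_version M (hist_space SS t \<Otimes>\<^sub>M count_space UNIV) (\<lambda>\<omega>. (obs_hist A S t \<omega>, A t \<omega>))
          (\<lambda>\<omega>. obs_out A Y t \<omega> + Q (Suc t) p (obs_hist A S (Suc t) \<omega>, p (Suc t) (obs_hist A S (Suc t) \<omega>)))
          (Q t p))"
    and backward: "\<forall>t\<in>{1..T}. piB t \<in> Pol t \<and>
        (\<forall>p\<in>Pol t. (LINT \<omega>|M. Q t piB (obs_hist A S t \<omega>, p (obs_hist A S t \<omega>)))
                 \<le> (LINT \<omega>|M. Q t piB (obs_hist A S t \<omega>, piB t (obs_hist A S t \<omega>))))"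
    and correct_spec: "\<exists>piS. (\<forall>t\<in>{1..T}. piS t \<in> Pol t) \<and>
        (\<forall>t\<in>{2..T}. AE \<omega> in M. \<forall>p\<in>Pol t.
            Q t piS (obs_hist A S t \<omega>, p (obs_hist A S t \<omega>))
              \<le> Q t piS (obs_hist A S t \<omega>, piS t (obs_hist A S t \<omega>)))"
    and pol: "\<forall>t\<in>{1..T}. pol t \<in> Pol t"
begin

abbreviation "H t \<equiv> obs_hist A S t"
abbreviation "HS t \<equiv> hist_space SS t"
definition "PP = {p. \<forall>t\<in>{1..T}. p t \<in> Pol t}"

lemma P: "prob_space M" by (rule M)

lemma space_nonempty: "space M \<noteq> {}"
  using prob_space.not_empty[OF M] .

lemma d_pos: "t \<in> {1..T} \<Longrightarrow> 0 < d t"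
  using A_meas space_nonempty by fastforce

lemma A_m: "t \<in> {1..T} \<Longrightarrow> A t \<in> measurable M (count_space UNIV)"
  using A_meas by auto

lemma finite_act_seqs: "finite (act_seqs d k)"
proof -
  have "act_seqs d k \<subseteq> {bs. set bs \<subseteq> {..<Max (d ` {1..k}) + 1} \<and> length bs = k}"
  proof
    fix bs assume "bs \<in> act_seqs d k"
    then have l: "length bs = k" and b: "\<forall>i<k. bs ! i < d (i+1)" by (auto simp: act_seqs_def)
    have "x < Max (d ` {1..k}) + 1" if xin: "x \<in> set bs" for x
    proof -
      obtain i where i: "i < k" "bs ! i = x" using xin l unfolding in_set_conv_nth by blast
      have "d (i+1) \<le> Max (d ` {1..k})" using i by (intro Max_ge) auto
      moreover have "x < d (i+1)" using b i by auto
      ultimately show ?thesis by linarith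
    qed
    then show "bs \<in> {bs. set bs \<subseteq> {..<Max (d ` {1..k}) + 1} \<and> length bs = k}" using l by auto
  qed
  moreover have "finite {bs. set bs \<subseteq> {..<Max (d ` {1..k}) + 1} \<and> length bs = k}"
    by (rule finite_lists_length_eq) auto
  ultimately show ?thesis by (rule finite_subset)
qed

lemma take_act_seqs: "bs \<in> act_seqs d k \<Longrightarrow> j \<le> k \<Longrightarrow> take j bs \<in> act_seqs d j"
  by (auto simp: act_seqs_def)

lemma obs_acts_in: "\<omega> \<in> space M \<Longrightarrow> k \<le> T \<Longrightarrow> obs_acts A k \<omega> \<in> act_seqs d k"
proof -
  assume a: "\<omega> \<in> space M" "k \<le> T"
  have "A (i + 1) \<omega> < d (i + 1)" if "i < k" for i using A_meas a that by auto
  then show ?thesis by (auto simp: act_seqs_def obs_acts_def nth_append simp del: upt_Suc)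
qed

lemma obs_acts_take: "j \<le> k \<Longrightarrow> take j (obs_acts A k \<omega>) = obs_acts A j \<omega>"
  by (simp add: obs_acts_def take_map take_upt min_def del: upt_Suc)

lemma obs_acts_Suc: "obs_acts A (Suc k) \<omega> = obs_acts A k \<omega> @ [A (Suc k) \<omega>]"
  by (simp add: obs_acts_def upt_Suc)

lemma length_obs_acts[simp]: "length (obs_acts A k \<omega>) = k"
  by (simp add: obs_acts_def)

lemma obs_acts_nth: "i < k \<Longrightarrow> obs_acts A k \<omega> ! i = A (Suc i) \<omega>"
  by (simp add: obs_acts_def)

lemma obs_acts_eq_iff: "length bs = k \<Longrightarrow> obs_acts A k \<omega> = bs \<longleftrightarrow> (\<forall>i<k. A (Suc i) \<omega> = bs ! i)"
  by (auto simp: list_eq_iff_nth_eq obs_acts_nth)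

lemma obs_acts_m: "k \<le> T \<Longrightarrow> obs_acts A k \<in> measurable M (count_space UNIV)"
proof -
  assume k: "k \<le> T"
  have "obs_acts A k -` {bs} \<inter> space M \<in> sets M" for bs
  proof (cases "length bs = k")
    case False
    then have "obs_acts A k -` {bs} \<inter> space M = {}" by (auto dest: arg_cong[where f=length])
    then show ?thesis by simp
  next
    case True
    have eq: "obs_acts A k -` {bs} \<inter> space M = {\<omega>\<in>space M. \<forall>i\<in>{..<k}. A (Suc i) \<omega> = bs ! i}"
      using True obs_acts_eq_iff[OF True] by auto
    have "{\<omega>\<in>space M. \<forall>i\<in>{..<k}. A (Suc i) \<omega> = bs ! i} \<in> sets M"
    proof (cases "k = 0")
      case True then show ?thesis by simp
    next
      case False
      show ?thesis
      proof (rule sets.sets_Collect_finite_All')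
        fix i assume "i \<in> {..<k}"
        then have "A (Suc i) \<in> measurable M (count_space UNIV)" using k by (intro A_m) auto
        then have "A (Suc i) -` {bs ! i} \<inter> space M \<in> sets M" by (rule measurable_sets) simp
        moreover have "A (Suc i) -` {bs ! i} \<inter> space M = {x \<in> space M. A (Suc i) x = bs ! i}" by auto
        ultimately show "{x \<in> space M. A (Suc i) x = bs ! i} \<in> sets M" by simp
      qed (use False in auto)
    qed
    then show ?thesis using eq by simp
  qed
  then show ?thesis by (auto simp: measurable_count_space_eq2_countable)
qed

lemma obs_acts_m2: "k \<le> T \<Longrightarrow> obs_acts A k \<in> measurable M (count_space (act_seqs d k))"
  by (rule measurable_count_space_extend[OF subset_UNIV _ obs_acts_m]) (auto intro: obs_acts_in)

lemma pot_hist_m: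
  assumes "t \<le> T" "bs \<in> act_seqs d (t - 1)"
  shows "pot_hist S t bs \<in> measurable M (HS t)"
  unfolding pot_hist_def hist_space_def
proof (intro measurable_Pair measurable_restrict)
  fix s assume s: "s \<in> {1..t}"
  then have "take (s - 1) bs \<in> act_seqs d (s - 1)" using assms by (intro take_act_seqs) auto
  then show "S s (take (s - 1) bs) \<in> measurable M SS" using S_meas s assms by auto
qed auto

lemma H_m:
  assumes "t \<in> {1..T}" shows "H t \<in> measurable M (HS t)"
proof -
  have "(\<lambda>\<omega>. pot_hist S t (obs_acts A (t - 1) \<omega>) \<omega>) \<in> measurable M (HS t)"
  proof (rule measurable_compose_countable'[OF _ obs_acts_m2])
    fix bs assume "bs \<in> act_seqs d (t - 1)"
    then show "pot_hist S t bs \<in> measurable M (HS t)" using assms by (intro pot_hist_m) auto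
  next
    show "t - 1 \<le> T" using assms by auto
    show "countable (act_seqs d (t - 1))" by (rule countable_finite[OF finite_act_seqs])
  qed
  then show ?thesis by (simp add: obs_hist_def[abs_def])
qed

lemma H_space: "t \<in> {1..T} \<Longrightarrow> \<omega> \<in> space M \<Longrightarrow> H t \<omega> \<in> space (HS t)"
  using H_m[of t] measurable_space[of "H t" M "HS t" \<omega>] by simp

lemma pol_m: "t \<in> {1..T} \<Longrightarrow> p \<in> Pol t \<Longrightarrow> p \<in> measurable (HS t) (count_space UNIV)"
  using Pi_policies by auto

lemma pol_lt: "t \<in> {1..T} \<Longrightarrow> p \<in> Pol t \<Longrightarrow> \<omega> \<in> space M \<Longrightarrow> p (H t \<omega>) < d t"
proof -
  assume a: "t \<in> {1..T}" "p \<in> Pol t" "\<omega> \<in> space M"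
  then show ?thesis using Pi_policies H_space[OF a(1,3)] by simp
qed

end


context dtr begin

definition "Xa t a \<omega> = ((\<lambda>s\<in>{t..T}. Y s (take s a) \<omega>), (\<lambda>s\<in>{Suc t..T}. S s (take (s - 1) a) \<omega>))"
definition "MX t = PiM {t..T} (\<lambda>_. borel :: real measure) \<Otimes>\<^sub>M PiM {Suc t..T} (\<lambda>_. SS)"

lemma Y_m: "s \<in> {1..T} \<Longrightarrow> bs \<in> act_seqs d s \<Longrightarrow> Y s bs \<in> borel_measurable M"
  using Y_int by (auto intro: borel_measurable_integrable)

lemma Xa_m:
  assumes t: "t \<in> {1..T}" and a: "a \<in> act_seqs d T"
  shows "Xa t a \<in> measurable M (MX t)"
  unfolding Xa_def[abs_def] MX_def
proof (intro measurable_Pair measurable_restrict)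
  fix s assume s: "s \<in> {t..T}"
  then show "Y s (take s a) \<in> borel_measurable M" using t a by (intro Y_m take_act_seqs) auto
next
  fix s assume s: "s \<in> {Suc t..T}"
  then have "take (s - 1) a \<in> act_seqs d (s - 1)" using a by (intro take_act_seqs) auto
  then show "S s (take (s - 1) a) \<in> measurable M SS" using S_meas s t by auto
qed

lemma e_props:
  assumes t: "t \<in> {1..T}"
  shows "(\<lambda>h. e t h b) \<in> borel_measurable (HS t)" "integrable M (\<lambda>\<omega>. e t (H t \<omega>) b)"
    "\<And>B. B \<in> sets (HS t) \<Longrightarrow> (LINT \<omega>|M. indicator B (H t \<omega>) * e t (H t \<omega>) b) = (LINT \<omega>|M. indicator B (H t \<omega>) * indicator {\<omega>. A t \<omega> = b} \<omega>)"
  using e_version t unfolding cexp_version_def by auto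

lemma e_m: "t \<in> {1..T} \<Longrightarrow> (\<lambda>\<omega>. e t (H t \<omega>) b) \<in> borel_measurable M"
  using e_props(2) by (rule borel_measurable_integrable)

lemma e_nonneg:
  assumes t: "t \<in> {1..T}"
  shows "AE \<omega> in M. 0 \<le> e t (H t \<omega>) b"
proof -
  note Hm = H_m[OF t]
  note em = e_props(1)[OF t]
  define B where "B = {h \<in> space (HS t). e t h b < 0}"
  have B: "B \<in> sets (HS t)" unfolding B_def using em by measurable
  have ind_m: "(\<lambda>\<omega>. indicator {\<omega>. A t \<omega> = b} \<omega> :: real) \<in> borel_measurable M"
  proof -
    have "{\<omega>\<in>space M. A t \<omega> = b} \<in> sets M"
      using measurable_sets[OF A_m[OF t], of "{b}"] by (simp add: vimage_def Int_def conj_commute)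
    then have "(\<lambda>\<omega>. indicator {\<omega>\<in>space M. A t \<omega> = b} \<omega> :: real) \<in> borel_measurable M" by simp
    also have "(\<lambda>\<omega>. indicator {\<omega>\<in>space M. A t \<omega> = b} \<omega> :: real) \<in> borel_measurable M \<longleftrightarrow> ?thesis"
      by (rule measurable_cong) (auto simp: indicator_def)
    finally show ?thesis .
  qed
  have "(LINT \<omega>|M. indicator B (H t \<omega>) * indicator {\<omega>. A t \<omega> = b} \<omega>) \<ge> (0::real)"
    by (rule Bochner_Integration.integral_nonneg_AE, rule AE_I2) (simp add: indicator_def)
  then have i0: "(LINT \<omega>|M. - (indicator B (H t \<omega>) * e t (H t \<omega>) b)) \<le> 0"
    using e_props(3)[OF t B] by simp
  have int: "integrable M (\<lambda>\<omega>. - (indicator B (H t \<omega>) * e t (H t \<omega>) b))"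
    by (intro integrable_minus integrable_bounded_mult[OF e_props(2)[OF t], where K=1])
       (use Hm B in auto)
  have nn: "AE \<omega> in M. 0 \<le> - (indicator B (H t \<omega>) * e t (H t \<omega>) b)"
    using H_space[OF t] by (auto simp: B_def indicator_def mult_le_0_iff)
  have "(LINT \<omega>|M. - (indicator B (H t \<omega>) * e t (H t \<omega>) b)) = 0"
    using i0 Bochner_Integration.integral_nonneg_AE[OF nn] by linarith
  then have "AE \<omega> in M. - (indicator B (H t \<omega>) * e t (H t \<omega>) b) = 0"
    using integral_nonneg_eq_0_iff_AE[OF int nn] by simp
  with AE_space show ?thesis
  proof eventually_elim
    case (elim \<omega>) then show ?case
      using H_space[OF t, of \<omega>] by (auto simp: B_def indicator_def split: if_splits)
  qed
qed

end

lemma integrable_bounded_fun: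
  fixes f :: "'a \<Rightarrow> real"
  assumes "prob_space M" "f \<in> borel_measurable M" "\<And>x. x \<in> space M \<Longrightarrow> \<bar>f x\<bar> \<le> K"
  shows "integrable M f"
proof -
  have "integrable M (\<lambda>x. f x * 1)"
    by (rule integrable_bounded_mult[OF _ assms(2,3)]) (use assms(1) in \<open>simp add: prob_space_def finite_measure.integrable_const\<close>)
  then show ?thesis by simp
qed

lemma distr_density_integral:
  fixes g :: "'a \<Rightarrow> real" and f :: "'b \<Rightarrow> real"
  assumes g: "g \<in> borel_measurable M" "AE x in M. 0 \<le> g x" and \<phi>: "\<phi> \<in> measurable M N"
    and f: "f \<in> borel_measurable N"
  shows "integral\<^sup>L (distr (density M (\<lambda>x. ennreal (g x))) N \<phi>) f = (LINT x|M. g x * f (\<phi> x))"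
proof -
  have "integral\<^sup>L (distr (density M (\<lambda>x. ennreal (g x))) N \<phi>) f = integral\<^sup>L (density M (\<lambda>x. ennreal (g x))) (\<lambda>x. f (\<phi> x))"
    by (rule integral_distr) (use \<phi> f in auto)
  also have "\<dots> = (LINT x|M. g x * f (\<phi> x))"
    by (subst integral_density) (use g \<phi> f in auto)
  finally show ?thesis .
qed

lemma distr_density_nn_integral:
  fixes g :: "'a \<Rightarrow> real" and f :: "'b \<Rightarrow> ennreal"
  assumes g: "g \<in> borel_measurable M" and \<phi>: "\<phi> \<in> measurable M N"
    and f: "f \<in> borel_measurable N"
  shows "integral\<^sup>N (distr (density M (\<lambda>x. ennreal (g x))) N \<phi>) f = (\<integral>\<^sup>+x. ennreal (g x) * f (\<phi> x) \<partial>M)"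
proof -
  have "integral\<^sup>N (distr (density M (\<lambda>x. ennreal (g x))) N \<phi>) f = integral\<^sup>N (density M (\<lambda>x. ennreal (g x))) (\<lambda>x. f (\<phi> x))"
    by (rule nn_integral_distr) (use \<phi> f in auto)
  also have "\<dots> = (\<integral>\<^sup>+x. ennreal (g x) * f (\<phi> x) \<partial>M)"
    by (subst nn_integral_density) (use g \<phi> f in auto)
  finally show ?thesis .
qed

lemma distr_density_emeasure:
  fixes g :: "'a \<Rightarrow> real"
  assumes g: "integrable M g" "AE x in M. 0 \<le> g x" and \<phi>: "\<phi> \<in> measurable M N" and C: "C \<in> sets N"
  shows "emeasure (distr (density M (\<lambda>x. ennreal (g x))) N \<phi>) C = ennreal (LINT x|M. g x * indicator C (\<phi> x))"
proof -
  have gm: "g \<in> borel_measurable M" using g(1) by (rule borel_measurable_integrable)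
  have "emeasure (distr (density M (\<lambda>x. ennreal (g x))) N \<phi>) C = integral\<^sup>N (distr (density M (\<lambda>x. ennreal (g x))) N \<phi>) (indicator C)"
    by (subst nn_integral_indicator) (use C in auto)
  also have "\<dots> = (\<integral>\<^sup>+x. ennreal (g x) * indicator C (\<phi> x) \<partial>M)"
    by (rule distr_density_nn_integral[OF gm \<phi>]) (use C in auto)
  also have "\<dots> = (\<integral>\<^sup>+x. ennreal (g x * indicator C (\<phi> x)) \<partial>M)"
    by (rule nn_integral_cong) (auto simp: indicator_def)
  also have "\<dots> = ennreal (LINT x|M. g x * indicator C (\<phi> x))"
  proof (rule nn_integral_eq_integral)
    show "integrable M (\<lambda>x. g x * indicator C (\<phi> x))"
      using integrable_bounded_mult[OF g(1), of "\<lambda>x. indicator C (\<phi> x)" 1] \<phi> C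
      by (simp add: mult.commute)
    show "AE x in M. 0 \<le> g x * indicator C (\<phi> x)" using g(2) by eventually_elim auto
  qed
  finally show ?thesis .
qed

context dtr begin

lemma indA_m: "t \<in> {1..T} \<Longrightarrow> (\<lambda>\<omega>. indicator {\<omega>. A t \<omega> = b} \<omega> :: real) \<in> borel_measurable M"
proof -
  assume t: "t \<in> {1..T}"
  have "{\<omega>\<in>space M. A t \<omega> = b} \<in> sets M"
    using measurable_sets[OF A_m[OF t], of "{b}"] by (simp add: vimage_def Int_def conj_commute)
  then have "(\<lambda>\<omega>. indicator {\<omega>\<in>space M. A t \<omega> = b} \<omega> :: real) \<in> borel_measurable M" by simp
  also have "(\<lambda>\<omega>. indicator {\<omega>\<in>space M. A t \<omega> = b} \<omega> :: real) \<in> borel_measurable M \<longleftrightarrow> ?thesis"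
    by (rule measurable_cong) (auto simp: indicator_def)
  finally show ?thesis .
qed

lemma rect:
  assumes t: "t \<in> {1..T}" and a: "a \<in> act_seqs d T" and D: "D \<in> sets (HS t)" and Bx: "Bx \<in> sets (MX t)"
  shows "(LINT \<omega>|M. indicator D (H t \<omega>) * (indicator Bx (Xa t a \<omega>) * indicator {\<omega>. A t \<omega> = b} \<omega>))
       = (LINT \<omega>|M. indicator D (H t \<omega>) * (e t (H t \<omega>) b * indicator Bx (Xa t a \<omega>)))"
proof -
  let ?F = "vimage_algebra (space M) (H t) (HS t)"
  interpret sigma_finite_subalgebra M ?F by (rule sfs_vimage[OF P H_m[OF t]])
  have Hv: "H t \<in> measurable ?F (HS t)"
    by (rule measurable_vimage_algebra1) (use H_space[OF t] in auto)
  have fD: "(\<lambda>\<omega>. indicator D (H t \<omega>) :: real) \<in> borel_measurable ?F"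
    using measurable_compose[OF Hv borel_measurable_indicator[OF D]] by (simp add: comp_def)
  have fDe: "(\<lambda>\<omega>. indicator D (H t \<omega>) * e t (H t \<omega>) b) \<in> borel_measurable ?F"
    using fD measurable_compose[OF Hv e_props(1)[OF t]] by (intro borel_measurable_times) auto
  have XB: "(\<lambda>\<omega>. indicator Bx (Xa t a \<omega>) :: real) \<in> borel_measurable M"
    using measurable_compose[OF Xa_m[OF t a] borel_measurable_indicator[OF Bx]] by (simp add: comp_def)
  have IA: "(\<lambda>\<omega>. indicator {\<omega>. A t \<omega> = b} \<omega> :: real) \<in> borel_measurable M" by (rule indA_m[OF t])
  have fDM: "(\<lambda>\<omega>. indicator D (H t \<omega>) :: real) \<in> borel_measurable M"
    by (rule measurable_from_subalg[OF subalg fD])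
  have rm: "\<And>g. real_cond_exp M ?F g \<in> borel_measurable M"
    by (rule borel_measurable_cond_exp2)
  have ci: "AE \<omega> in M. real_cond_exp M ?F (\<lambda>x. indicator Bx (Xa t a x) * indicator {b} (A t x)) \<omega>
              = real_cond_exp M ?F (\<lambda>x. indicator Bx (Xa t a x)) \<omega> * real_cond_exp M ?F (\<lambda>x. indicator {b} (A t x)) \<omega>"
    using seq_ign t a Bx unfolding cond_indep_def Let_def MX_def Xa_def[abs_def] by auto
  have ind_eq: "\<And>x. indicator {b} (A t x) = (indicator {\<omega>. A t \<omega> = b} x :: real)"
    by (auto simp: indicator_def)
  have intIA: "integrable M (\<lambda>\<omega>. indicator {\<omega>. A t \<omega> = b} \<omega> :: real)"
    by (rule integrable_bounded_fun[OF P IA, where K=1]) (auto simp: indicator_def)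
  have cvA: "cexp_version M (HS t) (H t) (\<lambda>\<omega>. indicator {\<omega>. A t \<omega> = b} \<omega>) (\<lambda>h. e t h b)"
    using e_version t by auto
  have rce_e: "AE \<omega> in M. real_cond_exp M ?F (\<lambda>\<omega>. indicator {\<omega>. A t \<omega> = b} \<omega>) \<omega> = e t (H t \<omega>) b"
    by (rule cexp_rce[OF P H_m[OF t] intIA cvA])
  have "(LINT \<omega>|M. indicator D (H t \<omega>) * (indicator Bx (Xa t a \<omega>) * indicator {\<omega>. A t \<omega> = b} \<omega>))
      = (LINT \<omega>|M. indicator D (H t \<omega>) * real_cond_exp M ?F (\<lambda>x. indicator Bx (Xa t a x) * indicator {\<omega>. A t \<omega> = b} x) \<omega>)"
  proof (rule real_cond_exp_intg(2)[symmetric, OF _ fD])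
    show "integrable M (\<lambda>x. indicator D (H t x) * (indicator Bx (Xa t a x) * indicator {\<omega>. A t \<omega> = b} x) :: real)"
      by (rule integrable_bounded_fun[where K=1]) (use P fDM XB IA in \<open>auto simp: indicator_def\<close>)
    show "(\<lambda>x. indicator Bx (Xa t a x) * indicator {\<omega>. A t \<omega> = b} x :: real) \<in> borel_measurable M"
      using XB IA by (rule borel_measurable_times)
  qed
  also have "\<dots> = (LINT \<omega>|M. indicator D (H t \<omega>) * (real_cond_exp M ?F (\<lambda>x. indicator Bx (Xa t a x)) \<omega> * e t (H t \<omega>) b))"
  proof (rule integral_cong_AE)
    show "(\<lambda>\<omega>. indicator D (H t \<omega>) * real_cond_exp M ?F (\<lambda>x. indicator Bx (Xa t a x) * indicator {\<omega>. A t \<omega> = b} x) \<omega>) \<in> borel_measurable M"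
      using fDM rm by (intro borel_measurable_times)
    show "(\<lambda>\<omega>. indicator D (H t \<omega>) * (real_cond_exp M ?F (\<lambda>x. indicator Bx (Xa t a x)) \<omega> * e t (H t \<omega>) b)) \<in> borel_measurable M"
      using fDM rm e_m[OF t] by (intro borel_measurable_times)
    show "AE x in M. indicator D (H t x) * real_cond_exp M ?F (\<lambda>x. indicator Bx (Xa t a x) * indicator {\<omega>. A t \<omega> = b} x) x =
          indicator D (H t x) * (real_cond_exp M ?F (\<lambda>x. indicator Bx (Xa t a x)) x * e t (H t x) b)"
      using ci rce_e by eventually_elim (simp add: ind_eq)
  qed
  also have "\<dots> = (LINT \<omega>|M. (indicator D (H t \<omega>) * e t (H t \<omega>) b) * real_cond_exp M ?F (\<lambda>x. indicator Bx (Xa t a x)) \<omega>)"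
    by (simp add: ac_simps)
  also have "\<dots> = (LINT \<omega>|M. (indicator D (H t \<omega>) * e t (H t \<omega>) b) * indicator Bx (Xa t a \<omega>))"
  proof (rule real_cond_exp_intg(2)[OF _ fDe XB])
    show "integrable M (\<lambda>x. indicator D (H t x) * e t (H t x) b * indicator Bx (Xa t a x))"
      using integrable_bounded_mult[OF e_props(2)[OF t], of "\<lambda>x. indicator D (H t x) * indicator Bx (Xa t a x)" 1] fDM XB
      by (auto simp: indicator_def ac_simps)
  qed
  also have "\<dots> = (LINT \<omega>|M. indicator D (H t \<omega>) * (e t (H t \<omega>) b * indicator Bx (Xa t a \<omega>)))"
    by (simp add: ac_simps)
  finally show ?thesis .
qed

end


context dtr begin

definition "\<mu>1 t a b = distr (density M (\<lambda>\<omega>. ennreal (indicator {\<omega>. A t \<omega> = b} \<omega>))) (HS t \<Otimes>\<^sub>M MX t) (\<lambda>\<omega>. (H t \<omega>, Xa t a \<omega>))"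
definition "\<mu>2 t a b = distr (density M (\<lambda>\<omega>. ennreal (e t (H t \<omega>) b))) (HS t \<Otimes>\<^sub>M MX t) (\<lambda>\<omega>. (H t \<omega>, Xa t a \<omega>))"

lemma HX_m: "t \<in> {1..T} \<Longrightarrow> a \<in> act_seqs d T \<Longrightarrow> (\<lambda>\<omega>. (H t \<omega>, Xa t a \<omega>)) \<in> measurable M (HS t \<Otimes>\<^sub>M MX t)"
  by (intro measurable_Pair H_m Xa_m)

lemma mu_eq:
  assumes t: "t \<in> {1..T}" and a: "a \<in> act_seqs d T"
  shows "\<mu>1 t a b = \<mu>2 t a b"
proof -
  let ?\<Omega> = "space (HS t) \<times> space (MX t)"
  let ?E = "{x \<times> y | x y. x \<in> sets (HS t) \<and> y \<in> sets (MX t)}"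
  note \<phi> = HX_m[OF t a]
  have intIA: "integrable M (\<lambda>\<omega>. indicator {\<omega>. A t \<omega> = b} \<omega> :: real)"
    by (rule integrable_bounded_fun[where K=1]) (use P indA_m[OF t] in \<open>auto simp: indicator_def\<close>)
  have em: "\<And>C. C \<in> sets (HS t \<Otimes>\<^sub>M MX t) \<Longrightarrow> emeasure (\<mu>1 t a b) C = ennreal (LINT \<omega>|M. indicator {\<omega>. A t \<omega> = b} \<omega> * indicator C (H t \<omega>, Xa t a \<omega>))"
    unfolding \<mu>1_def by (rule distr_density_emeasure[OF intIA _ \<phi>]) auto
  have em2: "\<And>C. C \<in> sets (HS t \<Otimes>\<^sub>M MX t) \<Longrightarrow> emeasure (\<mu>2 t a b) C = ennreal (LINT \<omega>|M. e t (H t \<omega>) b * indicator C (H t \<omega>, Xa t a \<omega>))"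
    unfolding \<mu>2_def by (rule distr_density_emeasure[OF e_props(2)[OF t] e_nonneg[OF t] \<phi>])
  show ?thesis
  proof (rule measure_eqI_generator_eq[where \<Omega>="?\<Omega>" and E="?E" and A="\<lambda>_. ?\<Omega>"])
    show "Int_stable ?E" by (rule Int_stable_pair_measure_generator)
    show "?E \<subseteq> Pow ?\<Omega>" by (auto dest: sets.sets_into_space)
    show "sets (\<mu>1 t a b) = sigma_sets ?\<Omega> ?E" by (simp only: \<mu>1_def sets_distr sets_pair_measure)
    show "sets (\<mu>2 t a b) = sigma_sets ?\<Omega> ?E" by (simp only: \<mu>2_def sets_distr sets_pair_measure)
    show "range (\<lambda>_. ?\<Omega>) \<subseteq> ?E" by blast
    show "(\<Union>i. ?\<Omega>) = ?\<Omega>" by simp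
    have "?\<Omega> \<in> sets (HS t \<Otimes>\<^sub>M MX t)" by (metis sets.top space_pair_measure)
    then show "\<And>i. emeasure (\<mu>1 t a b) ?\<Omega> \<noteq> \<infinity>" using em by simp
  next
    fix X assume "X \<in> ?E"
    then obtain D Bx where X: "X = D \<times> Bx" and D: "D \<in> sets (HS t)" and Bx: "Bx \<in> sets (MX t)" by blast
    have XS: "X \<in> sets (HS t \<Otimes>\<^sub>M MX t)" using X D Bx by auto
    have i1: "\<And>\<omega>. indicator X (H t \<omega>, Xa t a \<omega>) = (indicator D (H t \<omega>) * indicator Bx (Xa t a \<omega>) :: real)"
      by (simp add: X indicator_times)
    have "(LINT \<omega>|M. indicator {\<omega>. A t \<omega> = b} \<omega> * indicator X (H t \<omega>, Xa t a \<omega>) :: real)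
        = (LINT \<omega>|M. indicator D (H t \<omega>) * (indicator Bx (Xa t a \<omega>) * indicator {\<omega>. A t \<omega> = b} \<omega>))"
      by (simp add: i1 ac_simps)
    also have "\<dots> = (LINT \<omega>|M. indicator D (H t \<omega>) * (e t (H t \<omega>) b * indicator Bx (Xa t a \<omega>)))"
      by (rule rect[OF t a D Bx])
    also have "\<dots> = (LINT \<omega>|M. e t (H t \<omega>) b * indicator X (H t \<omega>, Xa t a \<omega>))"
      by (simp add: i1 ac_simps)
    finally show "emeasure (\<mu>1 t a b) X = emeasure (\<mu>2 t a b) X"
      using em[OF XS] em2[OF XS] by simp
  qed
qed

lemma CI_int:
  assumes t: "t \<in> {1..T}" and a: "a \<in> act_seqs d T" and f: "f \<in> borel_measurable (HS t \<Otimes>\<^sub>M MX t)"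
  shows "(LINT \<omega>|M. indicator {\<omega>. A t \<omega> = b} \<omega> * f (H t \<omega>, Xa t a \<omega>)) = (LINT \<omega>|M. e t (H t \<omega>) b * f (H t \<omega>, Xa t a \<omega>))"
proof -
  have "(LINT \<omega>|M. indicator {\<omega>. A t \<omega> = b} \<omega> * f (H t \<omega>, Xa t a \<omega>)) = integral\<^sup>L (\<mu>1 t a b) f"
    unfolding \<mu>1_def by (rule distr_density_integral[symmetric, OF indA_m[OF t] _ HX_m[OF t a] f]) auto
  also have "\<dots> = integral\<^sup>L (\<mu>2 t a b) f" by (simp add: mu_eq[OF t a])
  also have "\<dots> = (LINT \<omega>|M. e t (H t \<omega>) b * f (H t \<omega>, Xa t a \<omega>))"
    unfolding \<mu>2_def by (rule distr_density_integral[OF e_m[OF t] e_nonneg[OF t] HX_m[OF t a] f])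
  finally show ?thesis .
qed

lemma CI_nn:
  assumes t: "t \<in> {1..T}" and a: "a \<in> act_seqs d T" and f: "f \<in> borel_measurable (HS t \<Otimes>\<^sub>M MX t)"
  shows "(\<integral>\<^sup>+\<omega>. ennreal (indicator {\<omega>. A t \<omega> = b} \<omega>) * f (H t \<omega>, Xa t a \<omega>) \<partial>M) = (\<integral>\<^sup>+\<omega>. ennreal (e t (H t \<omega>) b) * f (H t \<omega>, Xa t a \<omega>) \<partial>M)"
proof -
  have "(\<integral>\<^sup>+\<omega>. ennreal (indicator {\<omega>. A t \<omega> = b} \<omega>) * f (H t \<omega>, Xa t a \<omega>) \<partial>M) = integral\<^sup>N (\<mu>1 t a b) f"
    unfolding \<mu>1_def by (rule distr_density_nn_integral[symmetric, OF indA_m[OF t] HX_m[OF t a] f])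
  also have "\<dots> = integral\<^sup>N (\<mu>2 t a b) f" by (simp add: mu_eq[OF t a])
  also have "\<dots> = (\<integral>\<^sup>+\<omega>. ennreal (e t (H t \<omega>) b) * f (H t \<omega>, Xa t a \<omega>) \<partial>M)"
    unfolding \<mu>2_def by (rule distr_density_nn_integral[OF e_m[OF t] HX_m[OF t a] f])
  finally show ?thesis .
qed

definition "a0 = replicate T (0::nat)"

lemma a0: "a0 \<in> act_seqs d T"
  using d_pos by (auto simp: a0_def act_seqs_def)

lemma CIH_int:
  assumes t: "t \<in> {1..T}" and f: "f \<in> borel_measurable (HS t)"
  shows "(LINT \<omega>|M. indicator {\<omega>. A t \<omega> = b} \<omega> * f (H t \<omega>)) = (LINT \<omega>|M. e t (H t \<omega>) b * f (H t \<omega>))"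
proof -
  have "(\<lambda>x. f (fst x)) \<in> borel_measurable (HS t \<Otimes>\<^sub>M MX t)"
    by (rule measurable_compose[OF measurable_fst f])
  from CI_int[OF t a0 this] show ?thesis by simp
qed

lemma CIH_nn:
  assumes t: "t \<in> {1..T}" and f: "f \<in> borel_measurable (HS t)"
  shows "(\<integral>\<^sup>+\<omega>. ennreal (indicator {\<omega>. A t \<omega> = b} \<omega>) * f (H t \<omega>) \<partial>M) = (\<integral>\<^sup>+\<omega>. ennreal (e t (H t \<omega>) b) * f (H t \<omega>) \<partial>M)"
proof -
  have "(\<lambda>x. f (fst x)) \<in> borel_measurable (HS t \<Otimes>\<^sub>M MX t)"
    by (rule measurable_compose[OF measurable_fst f])
  from CI_nn[OF t a0 this] show ?thesis by simp
qed

end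


lemma pred_eq_nat:
  fixes f g :: "'a \<Rightarrow> nat"
  assumes f: "f \<in> measurable M (count_space UNIV)" and g: "g \<in> measurable M (count_space UNIV)"
  shows "Measurable.pred M (\<lambda>x. f x = g x)"
proof (rule measurable_compose_countable[where f="\<lambda>i x. f x = i" and g=g, OF _ g])
  fix i :: nat
  have "{x \<in> space M. f x = i} \<in> sets M"
    using measurable_sets[OF f, of "{i}"] by (simp add: vimage_def Int_def conj_commute)
  then show "(\<lambda>x. f x = i) \<in> measurable M (count_space UNIV)"
    unfolding pred_def .
qed

context dtr begin

definition "wt t q \<omega> = (if A t \<omega> = q (H t \<omega>) then 1 / e t (H t \<omega>) (A t \<omega>) else 0)"

lemma HA_m: "t \<in> {1..T} \<Longrightarrow> (\<lambda>\<omega>. (H t \<omega>, A t \<omega>)) \<in> measurable M (HS t \<Otimes>\<^sub>M count_space UNIV)"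
  by (intro measurable_Pair H_m A_m)

lemma qH_m: "t \<in> {1..T} \<Longrightarrow> q \<in> Pol t \<Longrightarrow> (\<lambda>\<omega>. q (H t \<omega>)) \<in> measurable M (count_space UNIV)"
  by (rule measurable_compose[OF H_m pol_m])

lemma Hq_m: "t \<in> {1..T} \<Longrightarrow> q \<in> Pol t \<Longrightarrow> (\<lambda>\<omega>. (H t \<omega>, q (H t \<omega>))) \<in> measurable M (HS t \<Otimes>\<^sub>M count_space UNIV)"
  by (intro measurable_Pair H_m qH_m)

lemma ov: "t \<in> {1..T} \<Longrightarrow> q \<in> Pol t \<Longrightarrow> AE \<omega> in M. \<eta> \<le> e t (H t \<omega>) (q (H t \<omega>))"
  using overlap by auto

lemma wt_m: "t \<in> {1..T} \<Longrightarrow> q \<in> Pol t \<Longrightarrow> wt t q \<in> borel_measurable M"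
proof -
  assume t: "t \<in> {1..T}" and q: "q \<in> Pol t"
  have em: "(\<lambda>x. e t (fst x) (snd x)) \<in> borel_measurable (HS t \<Otimes>\<^sub>M count_space UNIV)"
  proof (rule measurable_compose_countable[where f="\<lambda>i x. e t (fst x) i" and g=snd])
    fix i :: nat show "(\<lambda>x. e t (fst x) i) \<in> borel_measurable (HS t \<Otimes>\<^sub>M count_space UNIV)"
      by (rule measurable_compose[OF measurable_fst e_props(1)[OF t], unfolded comp_def])
  qed (rule measurable_snd)
  note [measurable] = measurable_compose[OF HA_m[OF t] em, unfolded comp_def fst_conv snd_conv]
    pred_eq_nat[OF A_m[OF t] qH_m[OF t q]]
  show ?thesis unfolding wt_def[abs_def] by measurable
qed

lemma wt_bounds: "t \<in> {1..T} \<Longrightarrow> q \<in> Pol t \<Longrightarrow> AE \<omega> in M. 0 \<le> wt t q \<omega> \<and> wt t q \<omega> \<le> 1 / \<eta>"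
proof -
  assume t: "t \<in> {1..T}" and q: "q \<in> Pol t"
  show ?thesis using ov[OF t q]
  proof eventually_elim
    case (elim \<omega>) then show ?case
      using eta by (auto simp: wt_def intro!: divide_left_mono mult_pos_pos)
  qed
qed

lemma sum_pick:
  fixes g :: "nat \<Rightarrow> 'b::comm_monoid_add"
  shows "x < n \<Longrightarrow> (\<Sum>b<n. if x = b then g b else 0) = g x"
  by (simp add: sum.delta')

lemma IW_nn:
  assumes t: "t \<in> {1..T}" and q: "q \<in> Pol t" and f: "f \<in> borel_measurable (HS t \<Otimes>\<^sub>M count_space UNIV)"
  shows "(\<integral>\<^sup>+\<omega>. f (H t \<omega>, q (H t \<omega>)) \<partial>M) = (\<integral>\<^sup>+\<omega>. f (H t \<omega>, A t \<omega>) * ennreal (wt t q \<omega>) \<partial>M)"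
proof -
  define \<phi> where "\<phi> b h = f (h, b) * ennreal (if q h = b then 1 / e t h b else 0)" for b h
  have fb: "(\<lambda>h. f (h, b)) \<in> borel_measurable (HS t)" for b
    using measurable_compose[OF measurable_Pair[OF measurable_ident_sets[OF refl] measurable_const[of b]] f]
    by (simp add: comp_def)
  have \<phi>m: "\<phi> b \<in> borel_measurable (HS t)" for b
  proof -
    note [measurable] = fb e_props(1)[OF t] pol_m[OF t q]
    show ?thesis unfolding \<phi>_def[abs_def] by measurable
  qed
  have "(\<integral>\<^sup>+\<omega>. f (H t \<omega>, A t \<omega>) * ennreal (wt t q \<omega>) \<partial>M)
      = (\<integral>\<^sup>+\<omega>. (\<Sum>b<d t. ennreal (indicator {\<omega>. A t \<omega> = b} \<omega>) * \<phi> b (H t \<omega>)) \<partial>M)"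
  proof (rule nn_integral_cong)
    fix \<omega> assume \<omega>: "\<omega> \<in> space M"
    have lt: "A t \<omega> < d t" using A_meas t \<omega> by auto
    have "(\<Sum>b<d t. ennreal (indicator {\<omega>. A t \<omega> = b} \<omega>) * \<phi> b (H t \<omega>)) = (\<Sum>b<d t. if A t \<omega> = b then \<phi> b (H t \<omega>) else 0)"
      by (intro sum.cong) (auto simp: indicator_def)
    also have "\<dots> = \<phi> (A t \<omega>) (H t \<omega>)" by (rule sum_pick[OF lt])
    also have "\<dots> = f (H t \<omega>, A t \<omega>) * ennreal (wt t q \<omega>)" by (simp add: \<phi>_def wt_def eq_commute)
    finally show "f (H t \<omega>, A t \<omega>) * ennreal (wt t q \<omega>) = (\<Sum>b<d t. ennreal (indicator {\<omega>. A t \<omega> = b} \<omega>) * \<phi> b (H t \<omega>))" ..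
  qed
  also have "\<dots> = (\<Sum>b<d t. \<integral>\<^sup>+\<omega>. ennreal (indicator {\<omega>. A t \<omega> = b} \<omega>) * \<phi> b (H t \<omega>) \<partial>M)"
  proof (rule nn_integral_sum)
    fix b
    show "(\<lambda>\<omega>. ennreal (indicator {\<omega>. A t \<omega> = b} \<omega>) * \<phi> b (H t \<omega>)) \<in> borel_measurable M"
      using indA_m[OF t] measurable_compose[OF H_m[OF t] \<phi>m] by (auto simp: comp_def)
  qed
  also have "\<dots> = (\<Sum>b<d t. \<integral>\<^sup>+\<omega>. ennreal (e t (H t \<omega>) b) * \<phi> b (H t \<omega>) \<partial>M)"
    by (intro sum.cong refl CIH_nn[OF t \<phi>m])
  also have "\<dots> = (\<Sum>b<d t. \<integral>\<^sup>+\<omega>. (if q (H t \<omega>) = b then f (H t \<omega>, q (H t \<omega>)) else 0) \<partial>M)"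
  proof (intro sum.cong refl nn_integral_cong_AE)
    fix b
    show "AE \<omega> in M. ennreal (e t (H t \<omega>) b) * \<phi> b (H t \<omega>) = (if q (H t \<omega>) = b then f (H t \<omega>, q (H t \<omega>)) else 0)"
      using ov[OF t q]
    proof eventually_elim
      case (elim \<omega>)
      show ?case
      proof (cases "q (H t \<omega>) = b")
        case True
        then have pos: "0 < e t (H t \<omega>) b" using elim eta by auto
        have "ennreal (e t (H t \<omega>) b) * ennreal (1 / e t (H t \<omega>) b) = ennreal (e t (H t \<omega>) b * (1 / e t (H t \<omega>) b))"
          using pos by (subst ennreal_mult[symmetric]) auto
        also have "\<dots> = 1" using pos by simp
        finally show ?thesis using True by (simp add: \<phi>_def mult.left_commute[of "ennreal _"])
      qed (simp add: \<phi>_def)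
    qed
  qed
  also have "\<dots> = (\<integral>\<^sup>+\<omega>. (\<Sum>b<d t. if q (H t \<omega>) = b then f (H t \<omega>, q (H t \<omega>)) else 0) \<partial>M)"
  proof (rule nn_integral_sum[symmetric])
    fix b
    note [measurable] = measurable_compose[OF Hq_m[OF t q] f, unfolded comp_def] qH_m[OF t q]
    show "(\<lambda>\<omega>. if q (H t \<omega>) = b then f (H t \<omega>, q (H t \<omega>)) else 0) \<in> borel_measurable M" by measurable
  qed
  also have "\<dots> = (\<integral>\<^sup>+\<omega>. f (H t \<omega>, q (H t \<omega>)) \<partial>M)"
  proof (rule nn_integral_cong)
    fix \<omega> assume \<omega>: "\<omega> \<in> space M"
    show "(\<Sum>b<d t. if q (H t \<omega>) = b then f (H t \<omega>, q (H t \<omega>)) else 0) = f (H t \<omega>, q (H t \<omega>))"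
      by (rule sum_pick[where g="\<lambda>_. f (H t \<omega>, q (H t \<omega>))"]) (rule pol_lt[OF t q \<omega>])
  qed
  finally show ?thesis ..
qed

end


context dtr begin

lemma comp_m:
  assumes t: "t \<in> {1..T}" and q: "q \<in> Pol t" and f: "f \<in> borel_measurable (HS t \<Otimes>\<^sub>M count_space UNIV)"
  shows "(\<lambda>\<omega>. f (H t \<omega>, A t \<omega>)) \<in> borel_measurable M" "(\<lambda>\<omega>. f (H t \<omega>, q (H t \<omega>))) \<in> borel_measurable M"
  using measurable_compose[OF HA_m[OF t] f] measurable_compose[OF Hq_m[OF t q] f] by (auto simp: comp_def)

lemma comp_m':
  assumes t: "t \<in> {1..T}" and q: "q \<in> Pol t" and f: "f \<in> borel_measurable (HS t \<Otimes>\<^sub>M count_space UNIV)"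
  shows "(\<lambda>\<omega>. f (H t \<omega>, A t \<omega>)) \<in> borel_measurable M" "(\<lambda>\<omega>. f (H t \<omega>, q (H t \<omega>))) \<in> borel_measurable M"
  using measurable_compose[OF HA_m[OF t] f] measurable_compose[OF Hq_m[OF t q] f] by (auto simp: comp_def)

lemma IW_int:
  fixes f :: "'S hist \<times> nat \<Rightarrow> real"
  assumes t: "t \<in> {1..T}" and q: "q \<in> Pol t" and f: "f \<in> borel_measurable (HS t \<Otimes>\<^sub>M count_space UNIV)"
    and i: "integrable M (\<lambda>\<omega>. f (H t \<omega>, A t \<omega>))"
  shows "integrable M (\<lambda>\<omega>. f (H t \<omega>, A t \<omega>) * wt t q \<omega>)" "integrable M (\<lambda>\<omega>. f (H t \<omega>, q (H t \<omega>)))"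
proof -
  note fm = comp_m[OF t q f]
  note wm = wt_m[OF t q]
  show i2: "integrable M (\<lambda>\<omega>. f (H t \<omega>, A t \<omega>) * wt t q \<omega>)"
  proof (rule Bochner_Integration.integrable_bound[where f="\<lambda>\<omega>. (1/\<eta>) * \<bar>f (H t \<omega>, A t \<omega>)\<bar>"])
    show "integrable M (\<lambda>\<omega>. (1/\<eta>) * \<bar>f (H t \<omega>, A t \<omega>)\<bar>)" using i by auto
    show "(\<lambda>\<omega>. f (H t \<omega>, A t \<omega>) * wt t q \<omega>) \<in> borel_measurable M" using fm(1) wm by measurable
    show "AE \<omega> in M. norm (f (H t \<omega>, A t \<omega>) * wt t q \<omega>) \<le> norm ((1/\<eta>) * \<bar>f (H t \<omega>, A t \<omega>)\<bar>)"
      using wt_bounds[OF t q]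
    proof eventually_elim
      case (elim \<omega>)
      have "\<bar>f (H t \<omega>, A t \<omega>)\<bar> * wt t q \<omega> \<le> \<bar>f (H t \<omega>, A t \<omega>)\<bar> * (1/\<eta>)"
        by (rule mult_left_mono) (use elim in auto)
      then show ?case using eta elim by (simp add: abs_mult)
    qed
  qed
  have fa: "(\<lambda>x. ennreal (norm (f x))) \<in> borel_measurable (HS t \<Otimes>\<^sub>M count_space UNIV)" using f by measurable
  have "(\<integral>\<^sup>+\<omega>. ennreal (norm (f (H t \<omega>, q (H t \<omega>)))) \<partial>M) = (\<integral>\<^sup>+\<omega>. ennreal (norm (f (H t \<omega>, A t \<omega>))) * ennreal (wt t q \<omega>) \<partial>M)"
    by (rule IW_nn[OF t q fa])
  also have "\<dots> = (\<integral>\<^sup>+\<omega>. ennreal (norm (f (H t \<omega>, A t \<omega>) * wt t q \<omega>)) \<partial>M)"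
    using wt_bounds[OF t q] by (intro nn_integral_cong_AE) (auto simp: ennreal_mult abs_mult)
  also have "\<dots> < \<infinity>" using i2 by (simp add: integrable_iff_bounded)
  finally show "integrable M (\<lambda>\<omega>. f (H t \<omega>, q (H t \<omega>)))" using fm(2) by (simp add: integrable_iff_bounded)
qed

lemma IW_nonneg:
  fixes f :: "'S hist \<times> nat \<Rightarrow> real"
  assumes t: "t \<in> {1..T}" and q: "q \<in> Pol t" and f: "f \<in> borel_measurable (HS t \<Otimes>\<^sub>M count_space UNIV)"
    and nn: "\<And>x. 0 \<le> f x"
  shows "(LINT \<omega>|M. f (H t \<omega>, q (H t \<omega>))) = (LINT \<omega>|M. f (H t \<omega>, A t \<omega>) * wt t q \<omega>)"
proof -
  note fm = comp_m[OF t q f]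
  note wm = wt_m[OF t q]
  have fa: "(\<lambda>x. ennreal (f x)) \<in> borel_measurable (HS t \<Otimes>\<^sub>M count_space UNIV)" using f by measurable
  have "(LINT \<omega>|M. f (H t \<omega>, q (H t \<omega>))) = enn2real (\<integral>\<^sup>+\<omega>. ennreal (f (H t \<omega>, q (H t \<omega>))) \<partial>M)"
    by (rule integral_eq_nn_integral) (use fm nn in auto)
  also have "(\<integral>\<^sup>+\<omega>. ennreal (f (H t \<omega>, q (H t \<omega>))) \<partial>M) = (\<integral>\<^sup>+\<omega>. ennreal (f (H t \<omega>, A t \<omega>)) * ennreal (wt t q \<omega>) \<partial>M)"
    by (rule IW_nn[OF t q fa])
  also have "\<dots> = (\<integral>\<^sup>+\<omega>. ennreal (f (H t \<omega>, A t \<omega>) * wt t q \<omega>) \<partial>M)"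
    using wt_bounds[OF t q] by (intro nn_integral_cong_AE) (auto simp: ennreal_mult nn)
  also have "enn2real \<dots> = (LINT \<omega>|M. f (H t \<omega>, A t \<omega>) * wt t q \<omega>)"
  proof (rule integral_eq_nn_integral[symmetric])
    show "(\<lambda>\<omega>. f (H t \<omega>, A t \<omega>) * wt t q \<omega>) \<in> borel_measurable M" using fm wm by measurable
    show "AE \<omega> in M. 0 \<le> f (H t \<omega>, A t \<omega>) * wt t q \<omega>"
      using wt_bounds[OF t q] by eventually_elim (simp add: nn)
  qed
  finally show ?thesis .
qed

lemma IW_real:
  fixes f :: "'S hist \<times> nat \<Rightarrow> real"
  assumes t: "t \<in> {1..T}" and q: "q \<in> Pol t" and f: "f \<in> borel_measurable (HS t \<Otimes>\<^sub>M count_space UNIV)"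
    and i: "integrable M (\<lambda>\<omega>. f (H t \<omega>, A t \<omega>))"
  shows "(LINT \<omega>|M. f (H t \<omega>, q (H t \<omega>))) = (LINT \<omega>|M. f (H t \<omega>, A t \<omega>) * wt t q \<omega>)"
proof -
  define fp where "fp x = max (f x) 0" for x
  define fn where "fn x = max (- f x) 0" for x
  have fpm: "fp \<in> borel_measurable (HS t \<Otimes>\<^sub>M count_space UNIV)" unfolding fp_def[abs_def] using f by measurable
  have fnm: "fn \<in> borel_measurable (HS t \<Otimes>\<^sub>M count_space UNIV)" unfolding fn_def[abs_def] using f by measurable
  have ip: "integrable M (\<lambda>\<omega>. fp (H t \<omega>, A t \<omega>))" unfolding fp_def using i by (intro integrable_max) auto
  have in': "integrable M (\<lambda>\<omega>. fn (H t \<omega>, A t \<omega>))" unfolding fn_def using i by (intro integrable_max) auto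
  have split: "\<And>x. f x = fp x - fn x" by (auto simp: fp_def fn_def max_def)
  have "(LINT \<omega>|M. f (H t \<omega>, q (H t \<omega>))) = (LINT \<omega>|M. fp (H t \<omega>, q (H t \<omega>)) - fn (H t \<omega>, q (H t \<omega>)))"
    by (simp add: split[symmetric])
  also have "\<dots> = (LINT \<omega>|M. fp (H t \<omega>, q (H t \<omega>))) - (LINT \<omega>|M. fn (H t \<omega>, q (H t \<omega>)))"
    by (rule Bochner_Integration.integral_diff) (rule IW_int(2)[OF t q fpm ip], rule IW_int(2)[OF t q fnm in'])
  also have "\<dots> = (LINT \<omega>|M. fp (H t \<omega>, A t \<omega>) * wt t q \<omega>) - (LINT \<omega>|M. fn (H t \<omega>, A t \<omega>) * wt t q \<omega>)"
  proof -
    have "\<And>x. 0 \<le> fp x" "\<And>x. 0 \<le> fn x" by (auto simp: fp_def fn_def)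
    then show ?thesis by (simp only: IW_nonneg[OF t q fpm] IW_nonneg[OF t q fnm])
  qed
  also have "\<dots> = (LINT \<omega>|M. fp (H t \<omega>, A t \<omega>) * wt t q \<omega> - fn (H t \<omega>, A t \<omega>) * wt t q \<omega>)"
    by (rule Bochner_Integration.integral_diff[symmetric]) (rule IW_int(1)[OF t q fpm ip], rule IW_int(1)[OF t q fnm in'])
  also have "\<dots> = (LINT \<omega>|M. f (H t \<omega>, A t \<omega>) * wt t q \<omega>)"
    by (simp add: split[of "(H t _, A t _)"] left_diff_distrib)
  finally show ?thesis .
qed

lemma AE_transfer:
  assumes t: "t \<in> {1..T}" and q: "q \<in> Pol t" and P: "Measurable.pred (HS t \<Otimes>\<^sub>M count_space UNIV) P"
    and ae: "AE \<omega> in M. P (H t \<omega>, A t \<omega>)"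
  shows "AE \<omega> in M. P (H t \<omega>, q (H t \<omega>))"
proof -
  define f :: "'S hist \<times> nat \<Rightarrow> ennreal" where "f x = (if P x then 0 else 1)" for x
  have fm: "f \<in> borel_measurable (HS t \<Otimes>\<^sub>M count_space UNIV)" unfolding f_def[abs_def] using P by measurable
  have fqm: "(\<lambda>\<omega>. f (H t \<omega>, q (H t \<omega>))) \<in> borel_measurable M"
    using measurable_compose[OF Hq_m[OF t q] fm] by (simp add: comp_def)
  have "(\<integral>\<^sup>+\<omega>. f (H t \<omega>, q (H t \<omega>)) \<partial>M) = (\<integral>\<^sup>+\<omega>. f (H t \<omega>, A t \<omega>) * ennreal (wt t q \<omega>) \<partial>M)"
    by (rule IW_nn[OF t q fm])
  also have "\<dots> = (\<integral>\<^sup>+\<omega>. 0 \<partial>M)"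
    using ae by (intro nn_integral_cong_AE) (auto simp: f_def)
  finally have "(\<integral>\<^sup>+\<omega>. f (H t \<omega>, q (H t \<omega>)) \<partial>M) = 0" by simp
  then have "AE \<omega> in M. f (H t \<omega>, q (H t \<omega>)) = 0" using nn_integral_0_iff_AE[OF fqm] by simp
  then show ?thesis by eventually_elim (auto simp: f_def split: if_splits)
qed

end


context dtr begin

definition "Xt p t \<omega> = obs_out A Y t \<omega> + (if t < T then Q (Suc t) p (H (Suc t) \<omega>, p (Suc t) (H (Suc t) \<omega>)) else 0)"

lemma PP_pol: "p \<in> PP \<Longrightarrow> t \<in> {1..T} \<Longrightarrow> p t \<in> Pol t"
  by (auto simp: PP_def)

lemma obs_acts_ind_m: "k \<le> T \<Longrightarrow> (\<lambda>\<omega>. indicator {\<omega>. obs_acts A k \<omega> = bs} \<omega> :: real) \<in> borel_measurable M"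
proof -
  assume k: "k \<le> T"
  have "{\<omega>\<in>space M. obs_acts A k \<omega> = bs} \<in> sets M"
    using measurable_sets[OF obs_acts_m[OF k], of "{bs}"] by (simp add: vimage_def Int_def conj_commute)
  then have "(\<lambda>\<omega>. indicator {\<omega>\<in>space M. obs_acts A k \<omega> = bs} \<omega> :: real) \<in> borel_measurable M" by simp
  also have "(\<lambda>\<omega>. indicator {\<omega>\<in>space M. obs_acts A k \<omega> = bs} \<omega> :: real) \<in> borel_measurable M \<longleftrightarrow> ?thesis"
    by (rule measurable_cong) (auto simp: indicator_def)
  finally show ?thesis .
qed

lemma obs_out_sum:
  assumes t: "t \<in> {1..T}" and \<omega>: "\<omega> \<in> space M"
  shows "obs_out A Y t \<omega> = (\<Sum>bs\<in>act_seqs d t. indicator {\<omega>. obs_acts A t \<omega> = bs} \<omega> * Y t bs \<omega>)"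
proof -
  have "obs_acts A t \<omega> \<in> act_seqs d t" using obs_acts_in[OF \<omega>] t by auto
  then show ?thesis
    by (simp add: obs_out_def indicator_def sum.delta finite_act_seqs if_distrib[of "\<lambda>x. x * _"] cong: if_cong)
qed

lemma obs_out_int: "t \<in> {1..T} \<Longrightarrow> integrable M (obs_out A Y t)"
proof -
  assume t: "t \<in> {1..T}"
  have "integrable M (\<lambda>\<omega>. \<Sum>bs\<in>act_seqs d t. indicator {\<omega>. obs_acts A t \<omega> = bs} \<omega> * Y t bs \<omega>)"
  proof (rule Bochner_Integration.integrable_sum)
    fix bs assume bs: "bs \<in> act_seqs d t"
    show "integrable M (\<lambda>\<omega>. indicator {\<omega>. obs_acts A t \<omega> = bs} \<omega> * Y t bs \<omega>)"
      by (rule integrable_bounded_mult[where K=1]) (use Y_int t bs obs_acts_ind_m[of t bs] in auto)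
  qed
  then show ?thesis
    by (rule Bochner_Integration.integrable_cong[THEN iffD1, rotated -1]) (auto simp: obs_out_sum[OF t])
qed

lemma obs_out_m: "t \<in> {1..T} \<Longrightarrow> obs_out A Y t \<in> borel_measurable M"
  by (rule borel_measurable_integrable[OF obs_out_int])

lemma Q_cv:
  assumes p: "p \<in> PP" and t: "t \<in> {1..T}"
  shows "cexp_version M (HS t \<Otimes>\<^sub>M count_space UNIV) (\<lambda>\<omega>. (H t \<omega>, A t \<omega>)) (Xt p t) (Q t p)"
proof (cases "t < T")
  case True
  then show ?thesis using Q_version p t unfolding PP_def Xt_def by auto
next
  case False
  then have "t = T" using t by auto
  moreover have "Xt p T = obs_out A Y T" by (auto simp: Xt_def)
  ultimately show ?thesis using Q_version p t unfolding PP_def by auto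
qed

lemma Q_m: "p \<in> PP \<Longrightarrow> t \<in> {1..T} \<Longrightarrow> Q t p \<in> borel_measurable (HS t \<Otimes>\<^sub>M count_space UNIV)"
  using Q_cv unfolding cexp_version_def by blast

lemma Q_intA: "p \<in> PP \<Longrightarrow> t \<in> {1..T} \<Longrightarrow> integrable M (\<lambda>\<omega>. Q t p (H t \<omega>, A t \<omega>))"
  using Q_cv unfolding cexp_version_def by blast

lemma Q_intq: "p \<in> PP \<Longrightarrow> t \<in> {1..T} \<Longrightarrow> c \<in> Pol t \<Longrightarrow> integrable M (\<lambda>\<omega>. Q t p (H t \<omega>, c (H t \<omega>)))"
  by (rule IW_int(2)[OF _ _ Q_m Q_intA])

lemma Q_mq: "p \<in> PP \<Longrightarrow> t \<in> {1..T} \<Longrightarrow> c \<in> Pol t \<Longrightarrow> (\<lambda>\<omega>. Q t p (H t \<omega>, c (H t \<omega>))) \<in> borel_measurable M"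
  by (rule borel_measurable_integrable[OF Q_intq])

lemma Xt_int: "p \<in> PP \<Longrightarrow> t \<in> {1..T} \<Longrightarrow> integrable M (Xt p t)"
proof -
  assume p: "p \<in> PP" and t: "t \<in> {1..T}"
  show ?thesis
  proof (cases "t < T")
    case True
    then have t1: "Suc t \<in> {1..T}" by auto
    show ?thesis unfolding Xt_def[abs_def] using True
      by (simp add: obs_out_int[OF t] Q_intq[OF p t1 PP_pol[OF p t1]])
  next
    case False then show ?thesis unfolding Xt_def[abs_def] by (simp add: obs_out_int[OF t])
  qed
qed

lemma Q_bounded:
  assumes p: "p \<in> PP" and t: "t \<in> {1..T}" and \<psi>: "\<psi> \<in> borel_measurable (HS t \<Otimes>\<^sub>M count_space UNIV)"
    and b: "\<And>x. x \<in> space (HS t \<Otimes>\<^sub>M count_space UNIV) \<Longrightarrow> \<bar>\<psi> x\<bar> \<le> K"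
  shows "(LINT \<omega>|M. \<psi> (H t \<omega>, A t \<omega>) * Xt p t \<omega>) = (LINT \<omega>|M. \<psi> (H t \<omega>, A t \<omega>) * Q t p (H t \<omega>, A t \<omega>))"
  by (rule cexp_bounded[OF P HA_m[OF t] Xt_int[OF p t] Q_cv[OF p t] \<psi> b])

lemma Q_mono:
  assumes p: "p \<in> PP" "p' \<in> PP" and t: "t \<in> {1..T}" and le: "AE \<omega> in M. Xt p t \<omega> \<le> Xt p' t \<omega>"
  shows "AE \<omega> in M. Q t p (H t \<omega>, A t \<omega>) \<le> Q t p' (H t \<omega>, A t \<omega>)"
  by (rule cexp_mono[OF P HA_m[OF t] Xt_int[OF p(1) t] Xt_int[OF p(2) t] Q_cv[OF p(1) t] Q_cv[OF p(2) t] le])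

lemma Q_mono_c:
  assumes p: "p \<in> PP" "p' \<in> PP" and t: "t \<in> {1..T}" and c: "c \<in> Pol t"
    and le: "AE \<omega> in M. Xt p t \<omega> \<le> Xt p' t \<omega>"
  shows "AE \<omega> in M. Q t p (H t \<omega>, c (H t \<omega>)) \<le> Q t p' (H t \<omega>, c (H t \<omega>))"
proof (rule AE_transfer[OF t c _ Q_mono[OF p t le]])
  show "Measurable.pred (HS t \<Otimes>\<^sub>M count_space UNIV) (\<lambda>x. Q t p x \<le> Q t p' x)"
    using Q_m[OF p(1) t] Q_m[OF p(2) t] by measurable
qed

lemma Q_eq_c:
  assumes p: "p \<in> PP" "p' \<in> PP" and t: "t \<in> {1..T}" and c: "c \<in> Pol t"
    and eq: "AE \<omega> in M. Xt p t \<omega> = Xt p' t \<omega>"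
  shows "AE \<omega> in M. Q t p (H t \<omega>, c (H t \<omega>)) = Q t p' (H t \<omega>, c (H t \<omega>))"
proof -
  have "AE \<omega> in M. Xt p t \<omega> \<le> Xt p' t \<omega>" "AE \<omega> in M. Xt p' t \<omega> \<le> Xt p t \<omega>" using eq by auto
  from Q_mono_c[OF p t c this(1)] Q_mono_c[OF p(2) p(1) t c this(2)] show ?thesis
    by eventually_elim auto
qed

end


context dtr begin

definition "mk t bs l h x = (take (l - 1) bs, \<lambda>s'\<in>{1..l}. if s' \<le> t then snd h s' else snd x s')"

definition "Fb t q bs s z = fst (snd z) s * (\<Prod>l\<in>{Suc t..s}. if q l (mk t bs l (fst z) (snd z)) = bs ! (l - 1) then 1 else 0)"

lemma mk_m:
  assumes t: "t \<in> {1..T}" and l: "l \<in> {Suc t..T}"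
  shows "(\<lambda>z. mk t bs l (fst z) (snd z)) \<in> measurable (HS t \<Otimes>\<^sub>M MX t) (HS l)"
proof -
  have c: "(\<lambda>z. if s' \<le> t then snd (fst z) s' else snd (snd z) s') \<in> measurable (HS t \<Otimes>\<^sub>M MX t) SS"
    if s': "s' \<in> {1..l}" for s'
  proof (cases "s' \<le> t")
    case True
    have "(\<lambda>z. snd (fst z) s') \<in> measurable (HS t \<Otimes>\<^sub>M MX t) SS"
      unfolding hist_space_def using s' True
      by (intro measurable_component_singleton'[OF measurable_snd measurable_fst]) auto
    then show ?thesis using True by simp
  next
    case False
    have "(\<lambda>z. snd (snd z) s') \<in> measurable (HS t \<Otimes>\<^sub>M MX t) SS"
      unfolding MX_def using s' False l
      by (intro measurable_component_singleton'[OF measurable_snd measurable_snd]) auto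
    then show ?thesis using False by simp
  qed
  have r: "(\<lambda>z. \<lambda>s'\<in>{1..l}. if s' \<le> t then snd (fst z) s' else snd (snd z) s') \<in> measurable (HS t \<Otimes>\<^sub>M MX t) (PiM {1..l} (\<lambda>_. SS))"
    by (rule measurable_restrict) (rule c)
  have "(\<lambda>z. (take (l - 1) bs, \<lambda>s'\<in>{1..l}. if s' \<le> t then snd (fst z) s' else snd (snd z) s')) \<in> measurable (HS t \<Otimes>\<^sub>M MX t) (count_space UNIV \<Otimes>\<^sub>M PiM {1..l} (\<lambda>_. SS))"
    by (rule measurable_Pair[OF measurable_const r]) simp
  then show ?thesis by (simp add: mk_def hist_space_def)
qed

lemma Fb_m:
  assumes t: "t \<in> {1..T}" and q: "q \<in> PP" and s: "s \<in> {t..T}"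
  shows "Fb t q bs s \<in> borel_measurable (HS t \<Otimes>\<^sub>M MX t)"
  unfolding Fb_def[abs_def]
proof (intro borel_measurable_times borel_measurable_prod)
  show "(\<lambda>z. fst (snd z) s) \<in> borel_measurable (HS t \<Otimes>\<^sub>M MX t)"
    unfolding MX_def using s
    by (intro measurable_component_singleton'[OF measurable_fst measurable_snd]) auto
next
  fix l assume l: "l \<in> {Suc t..s}"
  then have l': "l \<in> {Suc t..T}" and l1: "l \<in> {1..T}" using s by auto
  have qm: "(\<lambda>z. q l (mk t bs l (fst z) (snd z))) \<in> measurable (HS t \<Otimes>\<^sub>M MX t) (count_space UNIV)"
    by (rule measurable_compose[OF mk_m[OF t l'] pol_m[OF l1 PP_pol[OF q l1]]])
  have "{z \<in> space (HS t \<Otimes>\<^sub>M MX t). q l (mk t bs l (fst z) (snd z)) = bs ! (l - 1)} \<in> sets (HS t \<Otimes>\<^sub>M MX t)"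
    using measurable_sets[OF qm, of "{bs ! (l - 1)}"] by (simp add: vimage_def Int_def conj_commute)
  then show "(\<lambda>z. if q l (mk t bs l (fst z) (snd z)) = bs ! (l - 1) then 1 else 0 :: real) \<in> borel_measurable (HS t \<Otimes>\<^sub>M MX t)"
    by (intro measurable_If measurable_const) auto
qed

definition "ext_seq bs = bs @ replicate (T - length bs) 0"

lemma ext_seq:
  assumes bs: "bs \<in> act_seqs d s" and s: "s \<le> T"
  shows "ext_seq bs \<in> act_seqs d T" "\<And>j. j \<le> s \<Longrightarrow> take j (ext_seq bs) = take j bs"
proof -
  have l: "length bs = s" using bs by (auto simp: act_seqs_def)
  show "ext_seq bs \<in> act_seqs d T"
    using bs s d_pos l by (auto simp: act_seqs_def ext_seq_def nth_append)
  show "\<And>j. j \<le> s \<Longrightarrow> take j (ext_seq bs) = take j bs"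
    using l by (auto simp: ext_seq_def)
qed

lemma snd_H: "t \<in> {1..T} \<Longrightarrow> s' \<in> {1..t} \<Longrightarrow> snd (H t \<omega>) s' = S s' (take (s' - 1) (obs_acts A (t - 1) \<omega>)) \<omega>"
  by (simp add: obs_hist_def pot_hist_def)

lemma fst_H: "fst (H t \<omega>) = obs_acts A (t - 1) \<omega>"
  by (simp add: obs_hist_def pot_hist_def)

lemma mk_eq:
  assumes t: "t \<in> {1..T}" and bs: "bs \<in> act_seqs d s" and s: "s \<in> {t..T}" and l: "l \<in> {Suc t..s}"
    and E: "obs_acts A (t - 1) \<omega> = take (t - 1) bs"
  shows "mk t bs l (H t \<omega>) (Xa t (ext_seq bs) \<omega>) = pot_hist S l (take (l - 1) bs) \<omega>"
proof -
  have "(\<lambda>s'\<in>{1..l}. if s' \<le> t then snd (H t \<omega>) s' else snd (Xa t (ext_seq bs) \<omega>) s')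
      = (\<lambda>s'\<in>{1..l}. S s' (take (s' - 1) (take (l - 1) bs)) \<omega>)"
  proof (rule restrict_ext)
    fix s' assume s': "s' \<in> {1..l}"
    show "(if s' \<le> t then snd (H t \<omega>) s' else snd (Xa t (ext_seq bs) \<omega>) s') = S s' (take (s' - 1) (take (l - 1) bs)) \<omega>"
    proof (cases "s' \<le> t")
      case True
      then have "snd (H t \<omega>) s' = S s' (take (s' - 1) (take (t - 1) bs)) \<omega>"
        using snd_H[OF t, of s' \<omega>] s' E by simp
      then show ?thesis using True s' l by (auto simp: min_def)
    next
      case False
      then have "s' \<in> {Suc t..T}" using s' l s by auto
      then have "snd (Xa t (ext_seq bs) \<omega>) s' = S s' (take (s' - 1) (ext_seq bs)) \<omega>" by (simp add: Xa_def)
      also have "take (s' - 1) (ext_seq bs) = take (s' - 1) bs" using ext_seq(2)[OF bs, of "s' - 1"] s' l s by auto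
      finally show ?thesis using False s' l by (simp add: min_def)
    qed
  qed
  then show ?thesis by (simp add: mk_def pot_hist_def Xa_def[symmetric])
qed

lemma pot_hist_t:
  assumes E: "obs_acts A (t - 1) \<omega> = take (t - 1) bs"
  shows "pot_hist S t (take (t - 1) bs) \<omega> = H t \<omega>"
  using E by (simp add: obs_hist_def)

end


context dtr begin

definition "trm q t s bs \<omega> = Y s bs \<omega> * (if obs_acts A (t - 1) \<omega> = take (t - 1) bs then 1 else 0) *
      (\<Prod>l\<in>{t..s}. if q l (pot_hist S l (take (l - 1) bs) \<omega>) = bs ! (l - 1) then 1 else 0)"

definition "Gt q t \<omega> = (\<Sum>s\<in>{t..T}. \<Sum>bs\<in>act_seqs d s. trm q t s bs \<omega>)"

lemma pvalue_Gt: "pvalue M T d A Y S q t = (LINT \<omega>|M. Gt q t \<omega>)"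
  by (simp add: pvalue_def Gt_def trm_def)

lemma ind_m:
  assumes f: "f \<in> measurable M (count_space UNIV)"
  shows "(\<lambda>\<omega>. if f \<omega> = v then 1 else 0 :: real) \<in> borel_measurable M"
proof -
  have "{\<omega> \<in> space M. f \<omega> = v} \<in> sets M"
    using measurable_sets[OF f, of "{v}"] by (simp add: vimage_def Int_def conj_commute)
  then show ?thesis by (intro measurable_If measurable_const) auto
qed

lemma polind_m:
  assumes l: "l \<in> {1..T}" and q: "q \<in> PP" and bs: "bs \<in> act_seqs d s" and ls: "l \<le> s"
  shows "(\<lambda>\<omega>. if q l (pot_hist S l (take (l - 1) bs) \<omega>) = v then 1 else 0 :: real) \<in> borel_measurable M"
proof (rule ind_m)
  have "take (l - 1) bs \<in> act_seqs d (l - 1)" using bs ls by (intro take_act_seqs) auto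
  then show "(\<lambda>\<omega>. q l (pot_hist S l (take (l - 1) bs) \<omega>)) \<in> measurable M (count_space UNIV)"
    using l by (intro measurable_compose[OF pot_hist_m pol_m] PP_pol[OF q]) auto
qed

lemma termfac_m:
  assumes t: "1 \<le> t" "t \<le> Suc s" and s: "s \<le> T" and q: "q \<in> PP" and bs: "bs \<in> act_seqs d s"
  shows "(\<lambda>\<omega>. (if obs_acts A (t - 1) \<omega> = take (t - 1) bs then 1 else 0) *
      (\<Prod>l\<in>{t..s}. if q l (pot_hist S l (take (l - 1) bs) \<omega>) = bs ! (l - 1) then 1 else 0) :: real) \<in> borel_measurable M"
proof (intro borel_measurable_times borel_measurable_prod)
  show "(\<lambda>\<omega>. if obs_acts A (t - 1) \<omega> = take (t - 1) bs then 1 else 0 :: real) \<in> borel_measurable M"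
    using t s by (intro ind_m obs_acts_m) auto
  fix l assume "l \<in> {t..s}"
  then show "(\<lambda>\<omega>. if q l (pot_hist S l (take (l - 1) bs) \<omega>) = bs ! (l - 1) then 1 else 0 :: real) \<in> borel_measurable M"
    using t s by (intro polind_m[OF _ q bs]) auto
qed

lemma termfac_bound:
  "\<bar>(if P then 1 else 0) * (\<Prod>l\<in>L. if R l then 1 else 0 :: real)\<bar> \<le> 1"
  by (induction L rule: infinite_finite_induct) (auto simp: abs_mult)

lemma trm_int:
  assumes t: "1 \<le> t" "t \<le> Suc s" and s: "s \<in> {1..T}" and q: "q \<in> PP" and bs: "bs \<in> act_seqs d s"
    and g: "g \<in> borel_measurable M" "\<And>\<omega>. \<omega> \<in> space M \<Longrightarrow> \<bar>g \<omega>\<bar> \<le> K"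
  shows "integrable M (\<lambda>\<omega>. g \<omega> * trm q t s bs \<omega>)"
proof -
  let ?I = "\<lambda>\<omega>. (if obs_acts A (t - 1) \<omega> = take (t - 1) bs then 1 else 0) *
      (\<Prod>l\<in>{t..s}. if q l (pot_hist S l (take (l - 1) bs) \<omega>) = bs ! (l - 1) then 1 else 0 :: real)"
  have "integrable M (\<lambda>\<omega>. (g \<omega> * ?I \<omega>) * Y s bs \<omega>)"
  proof (rule integrable_bounded_mult[where K=K])
    show "integrable M (Y s bs)" using Y_int s bs by auto
    show "(\<lambda>\<omega>. g \<omega> * ?I \<omega>) \<in> borel_measurable M"
      by (rule borel_measurable_times[OF g(1) termfac_m[OF t _ q bs]]) (use s in auto)
    fix \<omega> assume \<omega>: "\<omega> \<in> space M"
    have "\<bar>g \<omega> * ?I \<omega>\<bar> = \<bar>g \<omega>\<bar> * \<bar>?I \<omega>\<bar>" by (simp add: abs_mult)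
    also have "\<dots> \<le> K * 1" by (rule mult_mono[OF g(2)[OF \<omega>] termfac_bound]) (use g(2)[OF \<omega>] in auto)
    finally show "\<bar>g \<omega> * ?I \<omega>\<bar> \<le> K" by simp
  qed
  then show ?thesis by (simp add: trm_def ac_simps)
qed

lemma trm_m:
  assumes t: "1 \<le> t" "t \<le> Suc s" and s: "s \<in> {1..T}" and q: "q \<in> PP" and bs: "bs \<in> act_seqs d s"
  shows "trm q t s bs \<in> borel_measurable M"
  using trm_int[OF t s q bs, of "\<lambda>_. 1" 1] by (auto dest: borel_measurable_integrable)

end


lemma ind_gen:
  assumes f: "f \<in> measurable N (count_space UNIV)"
  shows "(\<lambda>x. if f x = v then 1 else 0 :: real) \<in> borel_measurable N"
proof -
  have "{x \<in> space N. f x = v} \<in> sets N"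
    using measurable_sets[OF f, of "{v}"] by (simp add: vimage_def Int_def conj_commute)
  then show ?thesis by (intro measurable_If measurable_const) auto
qed

context dtr begin

definition "wq t c h = (if \<eta> \<le> e t h (c h) then 1 / e t h (c h) else 0)"
definition "psi t c \<phi> z = \<phi> (fst z) * wq t c (fst z) * (if c (fst z) = snd z then 1 else 0)"

lemma ec_m:
  assumes t: "t \<in> {1..T}" and c: "c \<in> Pol t"
  shows "(\<lambda>h. e t h (c h)) \<in> borel_measurable (HS t)"
proof (rule measurable_compose_countable[where f="\<lambda>i h. e t h i" and g=c])
  fix i :: nat show "(\<lambda>h. e t h i) \<in> borel_measurable (HS t)" by (rule e_props(1)[OF t])
qed (rule pol_m[OF t c])

lemma wq_m: "t \<in> {1..T} \<Longrightarrow> c \<in> Pol t \<Longrightarrow> wq t c \<in> borel_measurable (HS t)"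
  unfolding wq_def[abs_def] using ec_m by measurable

lemma wq_bound: "\<bar>wq t c h\<bar> \<le> 1 / \<eta>"
  using eta by (auto simp: wq_def divide_simps)

lemma fst_HS_m: "fst \<in> measurable (HS t) (count_space UNIV)"
  unfolding hist_space_def by (rule measurable_fst)

lemma psi_m:
  assumes t: "t \<in> {1..T}" and c: "c \<in> Pol t" and \<phi>: "\<phi> \<in> borel_measurable (HS t)"
  shows "psi t c \<phi> \<in> borel_measurable (HS t \<Otimes>\<^sub>M count_space UNIV)"
proof -
  have p: "Measurable.pred (HS t \<Otimes>\<^sub>M count_space UNIV) (\<lambda>z. c (fst z) = snd z)"
    by (rule pred_eq_nat[OF measurable_compose[OF measurable_fst pol_m[OF t c]] measurable_snd])
  have "(\<lambda>z. \<phi> (fst z) * wq t c (fst z)) \<in> borel_measurable (HS t \<Otimes>\<^sub>M count_space UNIV)"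
    by (intro borel_measurable_times measurable_compose[OF measurable_fst \<phi>] measurable_compose[OF measurable_fst wq_m[OF t c]])
  then show ?thesis unfolding psi_def[abs_def] using p by measurable
qed

lemma psi_bound: "(\<And>h. h \<in> space (HS t) \<Longrightarrow> \<bar>\<phi> h\<bar> \<le> K) \<Longrightarrow> z \<in> space (HS t \<Otimes>\<^sub>M count_space UNIV) \<Longrightarrow> \<bar>psi t c \<phi> z\<bar> \<le> K / \<eta>"
proof -
  assume b: "\<And>h. h \<in> space (HS t) \<Longrightarrow> \<bar>\<phi> h\<bar> \<le> K" and z: "z \<in> space (HS t \<Otimes>\<^sub>M count_space UNIV)"
  have fz: "fst z \<in> space (HS t)" using z by (auto simp: space_pair_measure)
  have "\<bar>psi t c \<phi> z\<bar> \<le> \<bar>\<phi> (fst z)\<bar> * \<bar>wq t c (fst z)\<bar>"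
    by (auto simp: psi_def abs_mult)
  also have "\<dots> \<le> K * (1 / \<eta>)"
    by (rule mult_mono[OF b[OF fz] wq_bound]) (use b[OF fz] in auto)
  finally show ?thesis by simp
qed

lemma obs_acts_t_iff:
  assumes t: "t \<in> {1..T}" and bs: "bs \<in> act_seqs d s" and ts: "t \<le> s"
  shows "obs_acts A t \<omega> = take t bs \<longleftrightarrow> obs_acts A (t - 1) \<omega> = take (t - 1) bs \<and> A t \<omega> = bs ! (t - 1)"
proof -
  have l: "length bs = s" using bs by (auto simp: act_seqs_def)
  have t1: "t = Suc (t - 1)" using t by auto
  have "obs_acts A t \<omega> = obs_acts A (t - 1) \<omega> @ [A t \<omega>]" using obs_acts_Suc[of "t - 1"] t1 by simp
  moreover have "take t bs = take (t - 1) bs @ [bs ! (t - 1)]"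
    using take_Suc_conv_app_nth[of "t - 1" bs] t1 l ts by simp
  ultimately show ?thesis by simp
qed

lemma PT:
  assumes t: "t \<in> {1..T}" and q: "q \<in> PP" and s: "s \<in> {t..T}" and bs: "bs \<in> act_seqs d s"
    and \<phi>: "\<phi> \<in> borel_measurable (HS t)" and \<phi>b: "\<And>h. h \<in> space (HS t) \<Longrightarrow> \<bar>\<phi> h\<bar> \<le> K"
  shows "(LINT \<omega>|M. \<phi> (H t \<omega>) * trm q t s bs \<omega>) = (LINT \<omega>|M. psi t (q t) \<phi> (H t \<omega>, A t \<omega>) * trm q (Suc t) s bs \<omega>)"
proof -
  define c where "c = q t"
  have c: "c \<in> Pol t" using PP_pol[OF q t] by (simp add: c_def)
  define v where "v = bs ! (t - 1)"
  define a where "a = ext_seq bs"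
  have a: "a \<in> act_seqs d T" using ext_seq(1)[OF bs] s by (auto simp: a_def)
  have lbs: "length bs = s" using bs by (auto simp: act_seqs_def)
  define \<Phi> where "\<Phi> h = \<phi> h * wq t c h * (if fst h = take (t - 1) bs then 1 else 0) * (if c h = v then 1 else 0)" for h
  define f where "f z = \<Phi> (fst z) * Fb t q bs s z" for z
  define PR where "PR \<omega> = (\<Prod>l\<in>{Suc t..s}. if q l (pot_hist S l (take (l - 1) bs) \<omega>) = bs ! (l - 1) then 1 else 0 :: real)" for \<omega>
  have \<Phi>m: "\<Phi> \<in> borel_measurable (HS t)"
  proof -
    note [measurable] = \<phi> wq_m[OF t c] ind_gen[OF fst_HS_m] ind_gen[OF pol_m[OF t c]]
    show ?thesis unfolding \<Phi>_def[abs_def] by measurable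
  qed
  have fm: "f \<in> borel_measurable (HS t \<Otimes>\<^sub>M MX t)"
    unfolding f_def[abs_def]
    by (intro borel_measurable_times measurable_compose[OF measurable_fst \<Phi>m] Fb_m[OF t q s])
  have P1: "trm q t s bs \<omega> = Y s bs \<omega> * (if obs_acts A (t - 1) \<omega> = take (t - 1) bs then 1 else 0) * (if c (H t \<omega>) = v then 1 else 0) * PR \<omega>" for \<omega>
  proof -
    have ts: "t \<le> s" using s by auto
    have "{t..s} = insert t {Suc t..s}" using ts by auto
    then have "(\<Prod>l\<in>{t..s}. if q l (pot_hist S l (take (l - 1) bs) \<omega>) = bs ! (l - 1) then 1 else 0 :: real)
        = (if q t (pot_hist S t (take (t - 1) bs) \<omega>) = v then 1 else 0) * PR \<omega>"
      by (simp add: PR_def v_def)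
    moreover have "obs_acts A (t - 1) \<omega> = take (t - 1) bs \<Longrightarrow> pot_hist S t (take (t - 1) bs) \<omega> = H t \<omega>"
      by (rule pot_hist_t)
    ultimately show ?thesis by (auto simp: trm_def c_def)
  qed
  have P2: "Fb t q bs s (H t \<omega>, Xa t a \<omega>) = Y s bs \<omega> * PR \<omega>"
    if E: "obs_acts A (t - 1) \<omega> = take (t - 1) bs" for \<omega>
  proof -
    have "fst (Xa t a \<omega>) s = Y s (take s a) \<omega>" using s by (simp add: Xa_def)
    also have "take s a = bs" using ext_seq(2)[OF bs, of s] s lbs by (simp add: a_def)
    finally have y: "fst (Xa t a \<omega>) s = Y s bs \<omega>" .
    have "(\<Prod>l\<in>{Suc t..s}. if q l (mk t bs l (H t \<omega>) (Xa t a \<omega>)) = bs ! (l - 1) then 1 else 0 :: real) = PR \<omega>"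
      unfolding PR_def by (intro prod.cong refl) (simp add: mk_eq[OF t bs s _ E, folded a_def])
    then show ?thesis by (simp add: Fb_def y)
  qed
  have P3: "trm q (Suc t) s bs \<omega> = Y s bs \<omega> * (if obs_acts A t \<omega> = take t bs then 1 else 0) * PR \<omega>" for \<omega>
    by (simp add: trm_def PR_def)
  have P4: "obs_acts A t \<omega> = take t bs \<longleftrightarrow> obs_acts A (t - 1) \<omega> = take (t - 1) bs \<and> A t \<omega> = v" for \<omega>
    unfolding v_def by (rule obs_acts_t_iff[OF t bs]) (use s in auto)
  have L: "indicator {\<omega>. A t \<omega> = v} \<omega> * f (H t \<omega>, Xa t a \<omega>) = psi t (q t) \<phi> (H t \<omega>, A t \<omega>) * trm q (Suc t) s bs \<omega>"
    for \<omega>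
  proof (cases "obs_acts A (t - 1) \<omega> = take (t - 1) bs")
    case True
    show ?thesis using P2[OF True] P3[of \<omega>] P4[of \<omega>] True
      by (auto simp: f_def \<Phi>_def psi_def fst_H c_def[symmetric] indicator_def)
  next
    case False
    then show ?thesis using P3[of \<omega>] P4[of \<omega>] by (simp add: f_def \<Phi>_def fst_H)
  qed
  have R: "AE \<omega> in M. e t (H t \<omega>) v * f (H t \<omega>, Xa t a \<omega>) = \<phi> (H t \<omega>) * trm q t s bs \<omega>"
    using ov[OF t c]
  proof eventually_elim
    case (elim \<omega>)
    show ?case
    proof (cases "obs_acts A (t - 1) \<omega> = take (t - 1) bs \<and> c (H t \<omega>) = v")
      case True
      then have E: "obs_acts A (t - 1) \<omega> = take (t - 1) bs" and cv: "c (H t \<omega>) = v" by auto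
      have pos: "0 < e t (H t \<omega>) v" using elim cv eta by auto
      have ew: "e t (H t \<omega>) v * wq t c (H t \<omega>) = 1" using elim cv pos by (simp add: wq_def)
      have "e t (H t \<omega>) v * f (H t \<omega>, Xa t a \<omega>) = (e t (H t \<omega>) v * wq t c (H t \<omega>)) * \<phi> (H t \<omega>) * (Y s bs \<omega> * PR \<omega>)"
        using P2[OF E] E cv by (simp add: f_def \<Phi>_def fst_H)
      also have "\<dots> = \<phi> (H t \<omega>) * trm q t s bs \<omega>" using ew P1[of \<omega>] E cv by simp
      finally show ?thesis .
    next
      case False
      then show ?thesis using P1[of \<omega>] by (auto simp: f_def \<Phi>_def fst_H)
    qed
  qed
  have "(LINT \<omega>|M. \<phi> (H t \<omega>) * trm q t s bs \<omega>) = (LINT \<omega>|M. e t (H t \<omega>) v * f (H t \<omega>, Xa t a \<omega>))"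
  proof (rule integral_cong_AE)
    show "(\<lambda>\<omega>. \<phi> (H t \<omega>) * trm q t s bs \<omega>) \<in> borel_measurable M"
      using measurable_compose[OF H_m[OF t] \<phi>] trm_m[of t s q bs] t s q bs by (auto simp: comp_def)
    show "(\<lambda>\<omega>. e t (H t \<omega>) v * f (H t \<omega>, Xa t a \<omega>)) \<in> borel_measurable M"
      using e_m[OF t] measurable_compose[OF HX_m[OF t a] fm] by (auto simp: comp_def)
    show "AE \<omega> in M. \<phi> (H t \<omega>) * trm q t s bs \<omega> = e t (H t \<omega>) v * f (H t \<omega>, Xa t a \<omega>)"
      using R by auto
  qed
  also have "\<dots> = (LINT \<omega>|M. indicator {\<omega>. A t \<omega> = v} \<omega> * f (H t \<omega>, Xa t a \<omega>))"
    by (rule CI_int[OF t a fm, symmetric])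
  also have "\<dots> = (LINT \<omega>|M. psi t (q t) \<phi> (H t \<omega>, A t \<omega>) * trm q (Suc t) s bs \<omega>)"
    by (simp add: L)
  finally show ?thesis .
qed

end


context dtr begin

lemma Gt_sum:
  assumes t: "t \<in> {1..T}" and \<omega>: "\<omega> \<in> space M"
  shows "(\<Sum>s\<in>{t..T}. \<Sum>bs\<in>act_seqs d s. trm q (Suc t) s bs \<omega>) = obs_out A Y t \<omega> + Gt q (Suc t) \<omega>"
proof -
  have "{t..T} = insert t {Suc t..T}" using t by auto
  then have "(\<Sum>s\<in>{t..T}. \<Sum>bs\<in>act_seqs d s. trm q (Suc t) s bs \<omega>)
      = (\<Sum>bs\<in>act_seqs d t. trm q (Suc t) t bs \<omega>) + Gt q (Suc t) \<omega>"
    by (simp add: Gt_def)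
  moreover have "(\<Sum>bs\<in>act_seqs d t. trm q (Suc t) t bs \<omega>) = obs_out A Y t \<omega>"
  proof -
    have "(\<Sum>bs\<in>act_seqs d t. trm q (Suc t) t bs \<omega>) = (\<Sum>bs\<in>act_seqs d t. indicator {\<omega>. obs_acts A t \<omega> = bs} \<omega> * Y t bs \<omega>)"
    proof (rule sum.cong[OF refl])
      fix bs assume "bs \<in> act_seqs d t"
      then have "take t bs = bs" by (auto simp: act_seqs_def)
      then show "trm q (Suc t) t bs \<omega> = indicator {\<omega>. obs_acts A t \<omega> = bs} \<omega> * Y t bs \<omega>"
        by (simp add: trm_def indicator_def)
    qed
    also have "\<dots> = obs_out A Y t \<omega>" by (rule obs_out_sum[OF t \<omega>, symmetric])
    finally show ?thesis .
  qed
  ultimately show ?thesis by simp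
qed

definition "proj t h' = ((take (t - 1) (fst h'), restrict (snd h') {1..t}), fst h' ! (t - 1))"

lemma proj_m: "proj t \<in> measurable (HS (Suc t)) (HS t \<Otimes>\<^sub>M count_space UNIV)"
proof -
  have f1: "(\<lambda>h'. take (t - 1) (fst h')) \<in> measurable (HS (Suc t)) (count_space UNIV)"
    by (rule measurable_compose[OF fst_HS_m]) simp
  have f2: "(\<lambda>h'. fst h' ! (t - 1)) \<in> measurable (HS (Suc t)) (count_space UNIV)"
    by (rule measurable_compose[OF fst_HS_m]) simp
  have f3: "(\<lambda>h'. restrict (snd h') {1..t}) \<in> measurable (HS (Suc t)) (PiM {1..t} (\<lambda>_. SS))"
    unfolding hist_space_def by (rule measurable_compose[OF measurable_snd measurable_restrict_subset]) auto
  show ?thesis unfolding proj_def[abs_def] hist_space_def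
    by (intro measurable_Pair f1[unfolded hist_space_def] f2[unfolded hist_space_def] f3[unfolded hist_space_def])
qed

lemma proj_H:
  assumes t: "t \<in> {1..T}"
  shows "proj t (H (Suc t) \<omega>) = (H t \<omega>, A t \<omega>)"
proof -
  have t1: "Suc (t - 1) = t" using t by auto
  have a: "take (t - 1) (obs_acts A t \<omega>) = obs_acts A (t - 1) \<omega>" by (rule obs_acts_take) simp
  have b: "obs_acts A t \<omega> ! (t - 1) = A t \<omega>" using obs_acts_nth[of "t - 1" t \<omega>] t t1 by auto
  have c: "restrict (\<lambda>s\<in>{1..Suc t}. S s (take (s - 1) (obs_acts A t \<omega>)) \<omega>) {1..t}
      = (\<lambda>s\<in>{1..t}. S s (take (s - 1) (obs_acts A (t - 1) \<omega>)) \<omega>)"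
  proof (rule ext)
    fix s show "restrict (\<lambda>s\<in>{1..Suc t}. S s (take (s - 1) (obs_acts A t \<omega>)) \<omega>) {1..t} s
      = (\<lambda>s\<in>{1..t}. S s (take (s - 1) (obs_acts A (t - 1) \<omega>)) \<omega>) s"
      by (auto simp: obs_acts_take)
  qed
  have "proj t (H (Suc t) \<omega>) = ((take (t - 1) (obs_acts A t \<omega>), restrict (\<lambda>s\<in>{1..Suc t}. S s (take (s - 1) (obs_acts A t \<omega>)) \<omega>) {1..t}), obs_acts A t \<omega> ! (t - 1))"
    by (simp add: proj_def obs_hist_def pot_hist_def)
  also have "\<dots> = ((obs_acts A (t - 1) \<omega>, (\<lambda>s\<in>{1..t}. S s (take (s - 1) (obs_acts A (t - 1) \<omega>)) \<omega>)), A t \<omega>)"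
    by (simp only: a b c)
  also have "\<dots> = (H t \<omega>, A t \<omega>)" by (simp add: obs_hist_def pot_hist_def)
  finally show ?thesis .
qed

lemma ID_step:
  assumes t: "t \<in> {1..T}" and q: "q \<in> PP" and \<phi>: "\<phi> \<in> borel_measurable (HS t)"
    and \<phi>b: "\<And>h. h \<in> space (HS t) \<Longrightarrow> \<bar>\<phi> h\<bar> \<le> K"
    and IH: "t < T \<Longrightarrow> (\<And>\<phi>' K'. \<phi>' \<in> borel_measurable (HS (Suc t)) \<Longrightarrow> (\<And>h. h \<in> space (HS (Suc t)) \<Longrightarrow> \<bar>\<phi>' h\<bar> \<le> K') \<Longrightarrow>
        (LINT \<omega>|M. \<phi>' (H (Suc t) \<omega>) * Gt q (Suc t) \<omega>) = (LINT \<omega>|M. \<phi>' (H (Suc t) \<omega>) * Q (Suc t) q (H (Suc t) \<omega>, q (Suc t) (H (Suc t) \<omega>))))"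
  shows "(LINT \<omega>|M. \<phi> (H t \<omega>) * Gt q t \<omega>) = (LINT \<omega>|M. \<phi> (H t \<omega>) * Q t q (H t \<omega>, q t (H t \<omega>)))"
proof -
  define c where "c = q t"
  have c: "c \<in> Pol t" using PP_pol[OF q t] by (simp add: c_def)
  define \<psi> where "\<psi> = psi t c \<phi>"
  have \<psi>m: "\<psi> \<in> borel_measurable (HS t \<Otimes>\<^sub>M count_space UNIV)" unfolding \<psi>_def by (rule psi_m[OF t c \<phi>])
  have \<psi>b: "\<And>z. z \<in> space (HS t \<Otimes>\<^sub>M count_space UNIV) \<Longrightarrow> \<bar>\<psi> z\<bar> \<le> K / \<eta>"
    unfolding \<psi>_def by (rule psi_bound[OF \<phi>b])
  have \<phi>H: "(\<lambda>\<omega>. \<phi> (H t \<omega>)) \<in> borel_measurable M" by (rule measurable_compose[OF H_m[OF t] \<phi>])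
  have \<phi>Hb: "\<And>\<omega>. \<omega> \<in> space M \<Longrightarrow> \<bar>\<phi> (H t \<omega>)\<bar> \<le> K" using \<phi>b H_space[OF t] by auto
  have \<psi>H: "(\<lambda>\<omega>. \<psi> (H t \<omega>, A t \<omega>)) \<in> borel_measurable M" by (rule measurable_compose[OF HA_m[OF t] \<psi>m])
  have \<psi>Hb: "\<And>\<omega>. \<omega> \<in> space M \<Longrightarrow> \<bar>\<psi> (H t \<omega>, A t \<omega>)\<bar> \<le> K / \<eta>"
    using \<psi>b measurable_space[OF HA_m[OF t]] by auto
  have int1: "integrable M (\<lambda>\<omega>. \<phi> (H t \<omega>) * trm q t s bs \<omega>)" if "s \<in> {t..T}" "bs \<in> act_seqs d s" for s bs
    using that t by (intro trm_int[OF _ _ _ q _ \<phi>H \<phi>Hb]) auto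
  have int2: "integrable M (\<lambda>\<omega>. \<psi> (H t \<omega>, A t \<omega>) * trm q (Suc t) s bs \<omega>)" if "s \<in> {t..T}" "bs \<in> act_seqs d s" for s bs
    using that t by (intro trm_int[OF _ _ _ q _ \<psi>H \<psi>Hb]) auto
  have "(LINT \<omega>|M. \<phi> (H t \<omega>) * Gt q t \<omega>) = (LINT \<omega>|M. (\<Sum>s\<in>{t..T}. \<Sum>bs\<in>act_seqs d s. \<phi> (H t \<omega>) * trm q t s bs \<omega>))"
    by (simp add: Gt_def sum_distrib_left)
  also have "\<dots> = (\<Sum>s\<in>{t..T}. \<Sum>bs\<in>act_seqs d s. (LINT \<omega>|M. \<phi> (H t \<omega>) * trm q t s bs \<omega>))"
    using int1 by (simp add: Bochner_Integration.integral_sum Bochner_Integration.integrable_sum)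
  also have "\<dots> = (\<Sum>s\<in>{t..T}. \<Sum>bs\<in>act_seqs d s. (LINT \<omega>|M. \<psi> (H t \<omega>, A t \<omega>) * trm q (Suc t) s bs \<omega>))"
    unfolding \<psi>_def c_def using t q \<phi> \<phi>b by (intro sum.cong refl PT) auto
  also have "\<dots> = (LINT \<omega>|M. (\<Sum>s\<in>{t..T}. \<Sum>bs\<in>act_seqs d s. \<psi> (H t \<omega>, A t \<omega>) * trm q (Suc t) s bs \<omega>))"
    using int2 by (simp add: Bochner_Integration.integral_sum Bochner_Integration.integrable_sum)
  also have "\<dots> = (LINT \<omega>|M. \<psi> (H t \<omega>, A t \<omega>) * (obs_out A Y t \<omega> + Gt q (Suc t) \<omega>))"
    by (rule Bochner_Integration.integral_cong[OF refl]) (simp add: sum_distrib_left[symmetric] Gt_sum[OF t])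
  also have "\<dots> = (LINT \<omega>|M. \<psi> (H t \<omega>, A t \<omega>) * Xt q t \<omega>)"
  proof (cases "t < T")
    case False
    then have "Gt q (Suc t) = (\<lambda>_. 0)" by (auto simp: Gt_def fun_eq_iff)
    then show ?thesis using False by (simp add: Xt_def)
  next
    case True
    have t1: "Suc t \<in> {1..T}" using True by auto
    have ioo: "integrable M (\<lambda>\<omega>. \<psi> (H t \<omega>, A t \<omega>) * obs_out A Y t \<omega>)"
      by (rule integrable_bounded_mult[OF obs_out_int[OF t] \<psi>H \<psi>Hb])
    have iG: "integrable M (\<lambda>\<omega>. \<psi> (H t \<omega>, A t \<omega>) * Gt q (Suc t) \<omega>)"
      unfolding Gt_def sum_distrib_left by (intro Bochner_Integration.integrable_sum int2) auto
    have iQ: "integrable M (\<lambda>\<omega>. \<psi> (H t \<omega>, A t \<omega>) * Q (Suc t) q (H (Suc t) \<omega>, q (Suc t) (H (Suc t) \<omega>)))"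
      by (rule integrable_bounded_mult[OF Q_intq[OF q t1 PP_pol[OF q t1]] \<psi>H \<psi>Hb])
    define \<phi>' where "\<phi>' = (\<lambda>h'. \<psi> (proj t h'))"
    have \<phi>'m: "\<phi>' \<in> borel_measurable (HS (Suc t))" unfolding \<phi>'_def by (rule measurable_compose[OF proj_m \<psi>m])
    have \<phi>'b: "\<And>h. h \<in> space (HS (Suc t)) \<Longrightarrow> \<bar>\<phi>' h\<bar> \<le> K / \<eta>"
      unfolding \<phi>'_def using \<psi>b measurable_space[OF proj_m] by blast
    have \<phi>'H: "\<phi>' (H (Suc t) \<omega>) = \<psi> (H t \<omega>, A t \<omega>)" for \<omega> by (simp add: \<phi>'_def proj_H[OF t])
    have "(LINT \<omega>|M. \<psi> (H t \<omega>, A t \<omega>) * (obs_out A Y t \<omega> + Gt q (Suc t) \<omega>))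
        = (LINT \<omega>|M. \<psi> (H t \<omega>, A t \<omega>) * obs_out A Y t \<omega>) + (LINT \<omega>|M. \<psi> (H t \<omega>, A t \<omega>) * Gt q (Suc t) \<omega>)"
      using ioo iG by (simp add: distrib_left)
    also have "(LINT \<omega>|M. \<psi> (H t \<omega>, A t \<omega>) * Gt q (Suc t) \<omega>) = (LINT \<omega>|M. \<psi> (H t \<omega>, A t \<omega>) * Q (Suc t) q (H (Suc t) \<omega>, q (Suc t) (H (Suc t) \<omega>)))"
      using IH[OF True \<phi>'m \<phi>'b] by (simp add: \<phi>'H)
    also have "(LINT \<omega>|M. \<psi> (H t \<omega>, A t \<omega>) * obs_out A Y t \<omega>) + \<dots> = (LINT \<omega>|M. \<psi> (H t \<omega>, A t \<omega>) * Xt q t \<omega>)"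
      using ioo iQ True by (simp add: Xt_def distrib_left)
    finally show ?thesis .
  qed
  also have "\<dots> = (LINT \<omega>|M. \<psi> (H t \<omega>, A t \<omega>) * Q t q (H t \<omega>, A t \<omega>))"
    by (rule Q_bounded[OF q t \<psi>m \<psi>b])
  also have "\<dots> = (LINT \<omega>|M. \<phi> (H t \<omega>) * Q t q (H t \<omega>, c (H t \<omega>)))"
  proof -
    define f where "f z = \<phi> (fst z) * Q t q z" for z
    have fm: "f \<in> borel_measurable (HS t \<Otimes>\<^sub>M count_space UNIV)"
      unfolding f_def[abs_def] by (intro borel_measurable_times measurable_compose[OF measurable_fst \<phi>] Q_m[OF q t])
    have fi: "integrable M (\<lambda>\<omega>. f (H t \<omega>, A t \<omega>))"
      unfolding f_def fst_conv by (rule integrable_bounded_mult[OF Q_intA[OF q t] \<phi>H \<phi>Hb])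
    have "(LINT \<omega>|M. \<phi> (H t \<omega>) * Q t q (H t \<omega>, c (H t \<omega>))) = (LINT \<omega>|M. f (H t \<omega>, A t \<omega>) * wt t c \<omega>)"
      using IW_real[OF t c fm fi] by (simp add: f_def)
    also have "\<dots> = (LINT \<omega>|M. \<psi> (H t \<omega>, A t \<omega>) * Q t q (H t \<omega>, A t \<omega>))"
    proof (rule integral_cong_AE)
      show "(\<lambda>\<omega>. f (H t \<omega>, A t \<omega>) * wt t c \<omega>) \<in> borel_measurable M"
        using fi wt_m[OF t c] by (intro borel_measurable_times) (auto dest: borel_measurable_integrable)
      show "(\<lambda>\<omega>. \<psi> (H t \<omega>, A t \<omega>) * Q t q (H t \<omega>, A t \<omega>)) \<in> borel_measurable M"
        using \<psi>H Q_intA[OF q t] by (intro borel_measurable_times) (auto dest: borel_measurable_integrable)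
      show "AE \<omega> in M. f (H t \<omega>, A t \<omega>) * wt t c \<omega> = \<psi> (H t \<omega>, A t \<omega>) * Q t q (H t \<omega>, A t \<omega>)"
        using ov[OF t c] by eventually_elim (auto simp: f_def wt_def \<psi>_def psi_def wq_def)
    qed
    finally show ?thesis ..
  qed
  finally show ?thesis by (simp add: c_def)
qed

lemma ID_aux:
  "\<forall>t (\<phi>::'S hist \<Rightarrow> real) K. t \<in> {1..T} \<and> T - t = n \<and> \<phi> \<in> borel_measurable (HS t) \<and> (\<forall>h\<in>space (HS t). \<bar>\<phi> h\<bar> \<le> K) \<longrightarrow>
     (LINT \<omega>|M. \<phi> (H t \<omega>) * Gt q t \<omega>) = (LINT \<omega>|M. \<phi> (H t \<omega>) * Q t q (H t \<omega>, q t (H t \<omega>)))"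
  if q: "q \<in> PP"
proof (induction n)
  case 0
  show ?case
  proof (intro allI impI)
    fix t and \<phi> :: "'S hist \<Rightarrow> real" and K :: real assume a: "t \<in> {1..T} \<and> T - t = 0 \<and> \<phi> \<in> borel_measurable (HS t) \<and> (\<forall>h\<in>space (HS t). \<bar>\<phi> h\<bar> \<le> K)"
    show "(LINT \<omega>|M. \<phi> (H t \<omega>) * Gt q t \<omega>) = (LINT \<omega>|M. \<phi> (H t \<omega>) * Q t q (H t \<omega>, q t (H t \<omega>)))"
      by (rule ID_step[OF _ q, where K=K]) (use a in auto)
  qed
next
  case (Suc n)
  show ?case
  proof (intro allI impI)
    fix t and \<phi> :: "'S hist \<Rightarrow> real" and K :: real assume a: "t \<in> {1..T} \<and> T - t = Suc n \<and> \<phi> \<in> borel_measurable (HS t) \<and> (\<forall>h\<in>space (HS t). \<bar>\<phi> h\<bar> \<le> K)"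
    show "(LINT \<omega>|M. \<phi> (H t \<omega>) * Gt q t \<omega>) = (LINT \<omega>|M. \<phi> (H t \<omega>) * Q t q (H t \<omega>, q t (H t \<omega>)))"
    proof (rule ID_step[OF _ q, where K=K])
      fix \<phi>' :: "'S hist \<Rightarrow> real" and K' :: real assume m: "\<phi>' \<in> borel_measurable (HS (Suc t))" and b: "\<And>h. h \<in> space (HS (Suc t)) \<Longrightarrow> \<bar>\<phi>' h\<bar> \<le> K'"
      have "Suc t \<in> {1..T} \<and> T - Suc t = n \<and> \<phi>' \<in> borel_measurable (HS (Suc t)) \<and> (\<forall>h\<in>space (HS (Suc t)). \<bar>\<phi>' h\<bar> \<le> K')"
        using a m b by auto
      then show "(LINT \<omega>|M. \<phi>' (H (Suc t) \<omega>) * Gt q (Suc t) \<omega>) = (LINT \<omega>|M. \<phi>' (H (Suc t) \<omega>) * Q (Suc t) q (H (Suc t) \<omega>, q (Suc t) (H (Suc t) \<omega>)))"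
        by (rule Suc.IH[rule_format])
    qed (use a in auto)
  qed
qed

lemma ID:
  assumes q: "q \<in> PP" and t: "t \<in> {1..T}" and \<phi>: "\<phi> \<in> borel_measurable (HS t)" and \<phi>b: "\<And>h. h \<in> space (HS t) \<Longrightarrow> \<bar>\<phi> h\<bar> \<le> K"
  shows "(LINT \<omega>|M. \<phi> (H t \<omega>) * Gt q t \<omega>) = (LINT \<omega>|M. \<phi> (H t \<omega>) * Q t q (H t \<omega>, q t (H t \<omega>)))"
proof -
  have "\<forall>h\<in>space (HS t). \<bar>\<phi> h\<bar> \<le> K" using \<phi>b by blast
  with ID_aux[OF q, of "T - t"] t \<phi> show ?thesis by blast
qed

lemma pvalue_Q:
  assumes q: "q \<in> PP" and t: "t \<in> {1..T}"
  shows "pvalue M T d A Y S q t = (LINT \<omega>|M. Q t q (H t \<omega>, q t (H t \<omega>)))"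
  using ID[OF q t, of "\<lambda>_. 1" 1] by (simp add: pvalue_Gt)

end


lemma unroll_aux:
  fixes D R :: "nat \<Rightarrow> real" and \<eta> :: real
  assumes \<eta>: "0 < \<eta>"
    and Dnn: "\<And>t. t \<in> {2..T} \<Longrightarrow> 0 \<le> D t"
    and step: "\<And>t. t \<in> {1..T} \<Longrightarrow> D t \<le> R t + (if t < T then D (Suc t) / \<eta> else 0)"
  shows "\<forall>k. k \<in> {2..T} \<and> T - k = n \<longrightarrow> (2^(k-2) / \<eta>^(k-1)) * D k \<le> (\<Sum>t\<in>{k..T}. (2^(t-2) / \<eta>^(t-1)) * R t)"
proof (induction n)
  case 0
  show ?case
  proof (intro allI impI)
    fix k assume k: "k \<in> {2..T} \<and> T - k = 0"
    then have kT: "k = T" by auto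
    have "D k \<le> R k" using step[of k] k kT by auto
    moreover have "0 \<le> (2^(k-2) / \<eta>^(k-1) :: real)" using \<eta> by simp
    ultimately have "(2^(k-2) / \<eta>^(k-1)) * D k \<le> (2^(k-2) / \<eta>^(k-1)) * R k" by (rule mult_left_mono)
    then show "(2^(k-2) / \<eta>^(k-1)) * D k \<le> (\<Sum>t\<in>{k..T}. (2^(t-2) / \<eta>^(t-1)) * R t)" using kT by simp
  qed
next
  case (Suc n)
  show ?case
  proof (intro allI impI)
    fix k assume k: "k \<in> {2..T} \<and> T - k = Suc n"
    then have kT: "k < T" and k2: "2 \<le> k" by auto
    define ck where "ck = (2^(k-2) / \<eta>^(k-1) :: real)"
    define ck1 where "ck1 = (2^(Suc k-2) / \<eta>^(Suc k-1) :: real)"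
    have ck0: "0 \<le> ck" using \<eta> by (simp add: ck_def)
    have "D k \<le> R k + D (Suc k) / \<eta>" using step[of k] k kT by auto
    then have "ck * D k \<le> ck * (R k + D (Suc k) / \<eta>)" by (rule mult_left_mono[OF _ ck0])
    also have "\<dots> = ck * R k + (ck / \<eta>) * D (Suc k)" by (simp add: algebra_simps)
    also have "(ck / \<eta>) * D (Suc k) \<le> ck1 * D (Suc k)"
    proof (rule mult_right_mono)
      obtain j where j: "k = j + 2" using k2 by (metis le_add_diff_inverse2)
      have "ck / \<eta> = 2^j / \<eta>^(j+2)" using \<eta> by (simp add: ck_def j)
      also have "\<dots> \<le> 2^(j+1) / \<eta>^(j+2)" using \<eta> by (intro divide_right_mono) auto
      also have "\<dots> = ck1" by (simp add: ck1_def j)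
      finally show "ck / \<eta> \<le> ck1" .
      show "0 \<le> D (Suc k)" using Dnn[of "Suc k"] k kT by auto
    qed
    also have "ck1 * D (Suc k) \<le> (\<Sum>t\<in>{Suc k..T}. (2^(t-2) / \<eta>^(t-1)) * R t)"
      unfolding ck1_def by (rule Suc.IH[rule_format]) (use k kT in auto)
    finally have "ck * D k \<le> ck * R k + (\<Sum>t\<in>{Suc k..T}. (2^(t-2) / \<eta>^(t-1)) * R t)" by simp
    moreover have "{k..T} = insert k {Suc k..T}" using kT by auto
    ultimately show "(2^(k-2) / \<eta>^(k-1)) * D k \<le> (\<Sum>t\<in>{k..T}. (2^(t-2) / \<eta>^(t-1)) * R t)"
      by (simp add: ck_def)
  qed
qed

lemma unroll:
  fixes D R :: "nat \<Rightarrow> real" and \<eta> :: real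
  assumes \<eta>: "0 < \<eta>" and T: "1 \<le> T"
    and Dnn: "\<And>t. t \<in> {2..T} \<Longrightarrow> 0 \<le> D t"
    and step: "\<And>t. t \<in> {1..T} \<Longrightarrow> D t \<le> R t + (if t < T then D (Suc t) / \<eta> else 0)"
  shows "D 1 \<le> R 1 + (\<Sum>t\<in>{2..T}. (2^(t-2) / \<eta>^(t-1)) * R t)"
proof (cases "1 < T")
  case False
  then have "T = 1" using T by auto
  then show ?thesis using step[of 1] by simp
next
  case True
  have "D 1 \<le> R 1 + D 2 / \<eta>" using step[of 1] True T by (simp add: numeral_2_eq_2)
  also have "D 2 / \<eta> = (2^(2-2) / \<eta>^(2-1)) * D 2" by simp
  also have "\<dots> \<le> (\<Sum>t\<in>{2..T}. (2^(t-2) / \<eta>^(t-1)) * R t)"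
    using unroll_aux[OF \<eta> Dnn step, of "T - 2"] True by auto
  finally show ?thesis by simp
qed


context dtr begin

lemma welfare_pvalue: "welfare M T d Y S p = pvalue M T d A Y S p 1"
  by (simp add: welfare_def pvalue_def obs_acts_def)

lemma future_aux:
  assumes p: "p \<in> PP" and p': "p' \<in> PP"
  shows "\<forall>t. t \<in> {1..T} \<and> T - t = n \<and> (\<forall>l\<in>{Suc t..T}. p l = p' l) \<longrightarrow>
    (\<forall>c\<in>Pol t. AE \<omega> in M. Q t p (H t \<omega>, c (H t \<omega>)) = Q t p' (H t \<omega>, c (H t \<omega>)))"
proof (induction n)
  case 0
  show ?case
  proof (intro allI impI ballI)
    fix t c assume a: "t \<in> {1..T} \<and> T - t = 0 \<and> (\<forall>l\<in>{Suc t..T}. p l = p' l)" and c: "c \<in> Pol t"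
    then have "t = T" by auto
    then have "Xt p t = Xt p' t" by (simp add: Xt_def fun_eq_iff)
    then show "AE \<omega> in M. Q t p (H t \<omega>, c (H t \<omega>)) = Q t p' (H t \<omega>, c (H t \<omega>))"
      using a by (intro Q_eq_c[OF p p' _ c]) auto
  qed
next
  case (Suc n)
  show ?case
  proof (intro allI impI ballI)
    fix t c assume a: "t \<in> {1..T} \<and> T - t = Suc n \<and> (\<forall>l\<in>{Suc t..T}. p l = p' l)" and c: "c \<in> Pol t"
    then have tT: "t < T" and t: "t \<in> {1..T}" and t1: "Suc t \<in> {1..T}" by auto
    have eqp: "p (Suc t) = p' (Suc t)" using a tT by auto
    have c1: "p (Suc t) \<in> Pol (Suc t)" by (rule PP_pol[OF p t1])
    have "\<forall>c\<in>Pol (Suc t). AE \<omega> in M. Q (Suc t) p (H (Suc t) \<omega>, c (H (Suc t) \<omega>)) = Q (Suc t) p' (H (Suc t) \<omega>, c (H (Suc t) \<omega>))"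
    proof (rule Suc.IH[THEN spec, THEN mp])
      show "Suc t \<in> {1..T} \<and> T - Suc t = n \<and> (\<forall>l\<in>{Suc (Suc t)..T}. p l = p' l)" using a tT by auto
    qed
    then have "AE \<omega> in M. Q (Suc t) p (H (Suc t) \<omega>, p (Suc t) (H (Suc t) \<omega>)) = Q (Suc t) p' (H (Suc t) \<omega>, p (Suc t) (H (Suc t) \<omega>))"
      using c1 by blast
    then have "AE \<omega> in M. Xt p t \<omega> = Xt p' t \<omega>"
      by eventually_elim (simp add: Xt_def tT eqp)
    then show "AE \<omega> in M. Q t p (H t \<omega>, c (H t \<omega>)) = Q t p' (H t \<omega>, c (H t \<omega>))"
      by (rule Q_eq_c[OF p p' t c])
  qed
qed

lemma future:
  assumes p: "p \<in> PP" and p': "p' \<in> PP" and t: "t \<in> {1..T}" and eq: "\<And>l. l \<in> {Suc t..T} \<Longrightarrow> p l = p' l"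
    and c: "c \<in> Pol t"
  shows "AE \<omega> in M. Q t p (H t \<omega>, c (H t \<omega>)) = Q t p' (H t \<omega>, c (H t \<omega>))"
  using future_aux[OF p p', of "T - t"] t eq c by blast

definition "pS = (SOME piS. (\<forall>t\<in>{1..T}. piS t \<in> Pol t) \<and>
        (\<forall>t\<in>{2..T}. AE \<omega> in M. \<forall>p\<in>Pol t.
            Q t piS (obs_hist A S t \<omega>, p (obs_hist A S t \<omega>))
              \<le> Q t piS (obs_hist A S t \<omega>, piS t (obs_hist A S t \<omega>))))"

lemma pS_props: "pS \<in> PP" "\<And>t. t \<in> {2..T} \<Longrightarrow> AE \<omega> in M. \<forall>p\<in>Pol t.
            Q t pS (H t \<omega>, p (H t \<omega>)) \<le> Q t pS (H t \<omega>, pS t (H t \<omega>))"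
proof -
  have "(\<forall>t\<in>{1..T}. pS t \<in> Pol t) \<and>
        (\<forall>t\<in>{2..T}. AE \<omega> in M. \<forall>p\<in>Pol t.
            Q t pS (obs_hist A S t \<omega>, p (obs_hist A S t \<omega>))
              \<le> Q t pS (obs_hist A S t \<omega>, pS t (obs_hist A S t \<omega>)))"
    unfolding pS_def by (rule someI_ex[OF correct_spec])
  then show "pS \<in> PP" "\<And>t. t \<in> {2..T} \<Longrightarrow> AE \<omega> in M. \<forall>p\<in>Pol t.
            Q t pS (H t \<omega>, p (H t \<omega>)) \<le> Q t pS (H t \<omega>, pS t (H t \<omega>))"
    by (auto simp: PP_def)
qed

lemma cs: "t \<in> {2..T} \<Longrightarrow> c \<in> Pol t \<Longrightarrow> AE \<omega> in M. Q t pS (H t \<omega>, c (H t \<omega>)) \<le> Q t pS (H t \<omega>, pS t (H t \<omega>))"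
  using pS_props(2)[of t] by (auto elim: AE_mp)

lemma pB: "piB \<in> PP"
  using backward by (auto simp: PP_def)

lemma transfer_le:
  assumes p: "p \<in> PP" "p' \<in> PP" and t: "t \<in> {1..T}" and c: "c \<in> Pol t"
    and le: "AE \<omega> in M. Q t p (H t \<omega>, A t \<omega>) \<le> Q t p' (H t \<omega>, A t \<omega>)"
  shows "AE \<omega> in M. Q t p (H t \<omega>, c (H t \<omega>)) \<le> Q t p' (H t \<omega>, c (H t \<omega>))"
proof (rule AE_transfer[OF t c _ le])
  show "Measurable.pred (HS t \<Otimes>\<^sub>M count_space UNIV) (\<lambda>x. Q t p x \<le> Q t p' x)"
    using Q_m[OF p(1) t] Q_m[OF p(2) t] by measurable
qed

lemma CA:
  "\<forall>t. t \<in> {1..T} \<and> T - t = n \<longrightarrow> (\<forall>q\<in>PP. AE \<omega> in M. Q t q (H t \<omega>, A t \<omega>) \<le> Q t pS (H t \<omega>, A t \<omega>))"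
proof (induction n)
  case 0
  show ?case
  proof (intro allI impI ballI)
    fix t q assume a: "t \<in> {1..T} \<and> T - t = 0" and q: "q \<in> PP"
    then have "t = T" by auto
    then have "Xt q t = Xt pS t" by (simp add: Xt_def fun_eq_iff)
    then show "AE \<omega> in M. Q t q (H t \<omega>, A t \<omega>) \<le> Q t pS (H t \<omega>, A t \<omega>)"
      using a by (intro Q_mono[OF q pS_props(1)]) auto
  qed
next
  case (Suc n)
  show ?case
  proof (intro allI impI ballI)
    fix t q assume a: "t \<in> {1..T} \<and> T - t = Suc n" and q: "q \<in> PP"
    then have tT: "t < T" and t: "t \<in> {1..T}" and t1: "Suc t \<in> {1..T}" and t2: "Suc t \<in> {2..T}" by auto
    have c1: "q (Suc t) \<in> Pol (Suc t)" by (rule PP_pol[OF q t1])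
    have "\<forall>q\<in>PP. AE \<omega> in M. Q (Suc t) q (H (Suc t) \<omega>, A (Suc t) \<omega>) \<le> Q (Suc t) pS (H (Suc t) \<omega>, A (Suc t) \<omega>)"
    proof (rule Suc.IH[THEN spec, THEN mp])
      show "Suc t \<in> {1..T} \<and> T - Suc t = n" using a tT by auto
    qed
    then have "AE \<omega> in M. Q (Suc t) q (H (Suc t) \<omega>, A (Suc t) \<omega>) \<le> Q (Suc t) pS (H (Suc t) \<omega>, A (Suc t) \<omega>)"
      using q by blast
    from transfer_le[OF q pS_props(1) t1 c1 this] cs[OF t2 c1]
    have "AE \<omega> in M. Q (Suc t) q (H (Suc t) \<omega>, q (Suc t) (H (Suc t) \<omega>)) \<le> Q (Suc t) pS (H (Suc t) \<omega>, pS (Suc t) (H (Suc t) \<omega>))"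
      by eventually_elim auto
    then have "AE \<omega> in M. Xt q t \<omega> \<le> Xt pS t \<omega>"
      by eventually_elim (simp add: Xt_def tT)
    then show "AE \<omega> in M. Q t q (H t \<omega>, A t \<omega>) \<le> Q t pS (H t \<omega>, A t \<omega>)"
      by (rule Q_mono[OF q pS_props(1) t])
  qed
qed

lemma optS:
  assumes t: "t \<in> {2..T}" and q: "q \<in> PP"
  shows "AE \<omega> in M. Q t q (H t \<omega>, q t (H t \<omega>)) \<le> Q t pS (H t \<omega>, pS t (H t \<omega>))"
proof -
  have t1: "t \<in> {1..T}" using t by auto
  have c: "q t \<in> Pol t" by (rule PP_pol[OF q t1])
  have "AE \<omega> in M. Q t q (H t \<omega>, A t \<omega>) \<le> Q t pS (H t \<omega>, A t \<omega>)"
    using CA[of "T - t"] t1 q by blast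
  from transfer_le[OF q pS_props(1) t1 c this] cs[OF t c] show ?thesis
    by eventually_elim auto
qed

lemma B_opt:
  assumes t: "t \<in> {2..T}"
    and eqc: "\<And>c. c \<in> Pol t \<Longrightarrow> AE \<omega> in M. Q t piB (H t \<omega>, c (H t \<omega>)) = Q t pS (H t \<omega>, c (H t \<omega>))"
  shows "AE \<omega> in M. Q t piB (H t \<omega>, piB t (H t \<omega>)) = Q t pS (H t \<omega>, pS t (H t \<omega>))"
proof -
  have t1: "t \<in> {1..T}" using t by auto
  have cB: "piB t \<in> Pol t" and cS: "pS t \<in> Pol t" using PP_pol[OF pB t1] PP_pol[OF pS_props(1) t1] by auto
  define u where "u \<omega> = Q t pS (H t \<omega>, piB t (H t \<omega>))" for \<omega>
  define v where "v \<omega> = Q t pS (H t \<omega>, pS t (H t \<omega>))" for \<omega>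
  have ui: "integrable M u" unfolding u_def by (rule Q_intq[OF pS_props(1) t1 cB])
  have vi: "integrable M v" unfolding v_def by (rule Q_intq[OF pS_props(1) t1 cS])
  have Bu: "(LINT \<omega>|M. Q t piB (H t \<omega>, piB t (H t \<omega>))) = (LINT \<omega>|M. u \<omega>)"
    unfolding u_def using eqc[OF cB] Q_mq[OF pB t1 cB] Q_mq[OF pS_props(1) t1 cB]
    by (intro integral_cong_AE) auto
  have Bv: "(LINT \<omega>|M. Q t piB (H t \<omega>, pS t (H t \<omega>))) = (LINT \<omega>|M. v \<omega>)"
    unfolding v_def using eqc[OF cS] Q_mq[OF pB t1 cS] Q_mq[OF pS_props(1) t1 cS]
    by (intro integral_cong_AE) auto
  have "(LINT \<omega>|M. Q t piB (H t \<omega>, pS t (H t \<omega>))) \<le> (LINT \<omega>|M. Q t piB (H t \<omega>, piB t (H t \<omega>)))"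
    using backward t1 cS by blast
  then have le: "(LINT \<omega>|M. v \<omega>) \<le> (LINT \<omega>|M. u \<omega>)" using Bu Bv by simp
  have uv: "AE \<omega> in M. u \<omega> \<le> v \<omega>" unfolding u_def v_def by (rule cs[OF t cB])
  have nn: "AE \<omega> in M. 0 \<le> v \<omega> - u \<omega>" using uv by eventually_elim simp
  have "(LINT \<omega>|M. v \<omega> - u \<omega>) = (LINT \<omega>|M. v \<omega>) - (LINT \<omega>|M. u \<omega>)"
    using ui vi by simp
  moreover have "0 \<le> (LINT \<omega>|M. v \<omega> - u \<omega>)" using nn by (rule integral_nonneg_AE)
  ultimately have "(LINT \<omega>|M. v \<omega> - u \<omega>) = 0" using le by linarith
  then have "AE \<omega> in M. v \<omega> - u \<omega> = 0"
    using integral_nonneg_eq_0_iff_AE[OF Bochner_Integration.integrable_diff[OF vi ui] nn] by simp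
  with eqc[OF cB] show ?thesis by eventually_elim (simp add: u_def v_def)
qed

lemma CB:
  "\<forall>t. t \<in> {1..T} \<and> T - t = n \<longrightarrow>
     (\<forall>c\<in>Pol t. AE \<omega> in M. Q t piB (H t \<omega>, c (H t \<omega>)) = Q t pS (H t \<omega>, c (H t \<omega>))) \<and>
     (2 \<le> t \<longrightarrow> (AE \<omega> in M. Q t piB (H t \<omega>, piB t (H t \<omega>)) = Q t pS (H t \<omega>, pS t (H t \<omega>))))"
proof (induction n)
  case 0
  show ?case
  proof (intro allI impI)
    fix t assume a: "t \<in> {1..T} \<and> T - t = 0"
    then have tT: "t = T" and t: "t \<in> {1..T}" by auto
    then have "Xt piB t = Xt pS t" by (simp add: Xt_def fun_eq_iff)
    then have eqc: "\<And>c. c \<in> Pol t \<Longrightarrow> AE \<omega> in M. Q t piB (H t \<omega>, c (H t \<omega>)) = Q t pS (H t \<omega>, c (H t \<omega>))"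
      by (intro Q_eq_c[OF pB pS_props(1) t]) auto
    show "(\<forall>c\<in>Pol t. AE \<omega> in M. Q t piB (H t \<omega>, c (H t \<omega>)) = Q t pS (H t \<omega>, c (H t \<omega>))) \<and>
     (2 \<le> t \<longrightarrow> (AE \<omega> in M. Q t piB (H t \<omega>, piB t (H t \<omega>)) = Q t pS (H t \<omega>, pS t (H t \<omega>))))"
      using eqc B_opt[OF _ eqc] t by auto
  qed
next
  case (Suc n)
  show ?case
  proof (intro allI impI)
    fix t assume a: "t \<in> {1..T} \<and> T - t = Suc n"
    then have tT: "t < T" and t: "t \<in> {1..T}" by auto
    have "(\<forall>c\<in>Pol (Suc t). AE \<omega> in M. Q (Suc t) piB (H (Suc t) \<omega>, c (H (Suc t) \<omega>)) = Q (Suc t) pS (H (Suc t) \<omega>, c (H (Suc t) \<omega>))) \<and>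
     (2 \<le> Suc t \<longrightarrow> (AE \<omega> in M. Q (Suc t) piB (H (Suc t) \<omega>, piB (Suc t) (H (Suc t) \<omega>)) = Q (Suc t) pS (H (Suc t) \<omega>, pS (Suc t) (H (Suc t) \<omega>))))"
    proof (rule Suc.IH[THEN spec, THEN mp])
      show "Suc t \<in> {1..T} \<and> T - Suc t = n" using a tT by auto
    qed
    then have "AE \<omega> in M. Q (Suc t) piB (H (Suc t) \<omega>, piB (Suc t) (H (Suc t) \<omega>)) = Q (Suc t) pS (H (Suc t) \<omega>, pS (Suc t) (H (Suc t) \<omega>))"
      using t by auto
    then have "AE \<omega> in M. Xt piB t \<omega> = Xt pS t \<omega>"
      by eventually_elim (simp add: Xt_def tT)
    then have eqc: "\<And>c. c \<in> Pol t \<Longrightarrow> AE \<omega> in M. Q t piB (H t \<omega>, c (H t \<omega>)) = Q t pS (H t \<omega>, c (H t \<omega>))"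
      by (intro Q_eq_c[OF pB pS_props(1) t])
    show "(\<forall>c\<in>Pol t. AE \<omega> in M. Q t piB (H t \<omega>, c (H t \<omega>)) = Q t pS (H t \<omega>, c (H t \<omega>))) \<and>
     (2 \<le> t \<longrightarrow> (AE \<omega> in M. Q t piB (H t \<omega>, piB t (H t \<omega>)) = Q t pS (H t \<omega>, pS t (H t \<omega>))))"
      using eqc B_opt[OF _ eqc] t by auto
  qed
qed

lemma optB:
  assumes t: "t \<in> {2..T}" and q: "q \<in> PP"
  shows "AE \<omega> in M. Q t q (H t \<omega>, q t (H t \<omega>)) \<le> Q t piB (H t \<omega>, piB t (H t \<omega>))"
proof -
  have t1: "t \<in> {1..T}" using t by auto
  have "AE \<omega> in M. Q t piB (H t \<omega>, piB t (H t \<omega>)) = Q t pS (H t \<omega>, pS t (H t \<omega>))"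
    using CB[of "T - t"] t1 t by auto
  with optS[OF t q] show ?thesis by eventually_elim auto
qed

lemma domB:
  assumes t: "t \<in> {1..T}" and q: "q \<in> PP" and c: "c \<in> Pol t"
  shows "AE \<omega> in M. Q t q (H t \<omega>, c (H t \<omega>)) \<le> Q t piB (H t \<omega>, c (H t \<omega>))"
proof (rule Q_mono_c[OF q pB t c])
  show "AE \<omega> in M. Xt q t \<omega> \<le> Xt piB t \<omega>"
  proof (cases "t < T")
    case True
    then have t2: "Suc t \<in> {2..T}" using t by auto
    from optB[OF t2 q] show ?thesis by eventually_elim (simp add: Xt_def True)
  next
    case False then show ?thesis by (simp add: Xt_def)
  qed
qed

end


context dtr begin

lemma one_T: "1 \<in> {1..T}" using T by auto

lemma pol_PP: "pol \<in> PP" using pol by (simp add: PP_def)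

lemma W_le: assumes p: "p \<in> PP" shows "welfare M T d Y S p \<le> welfare M T d Y S piB"
proof -
  have c: "p 1 \<in> Pol 1" and cB: "piB 1 \<in> Pol 1" using PP_pol[OF p one_T] PP_pol[OF pB one_T] by auto
  have "welfare M T d Y S p = (LINT \<omega>|M. Q 1 p (H 1 \<omega>, p 1 (H 1 \<omega>)))"
    unfolding welfare_pvalue by (rule pvalue_Q[OF p one_T])
  also have "\<dots> \<le> (LINT \<omega>|M. Q 1 piB (H 1 \<omega>, p 1 (H 1 \<omega>)))"
    by (rule integral_mono_AE[OF Q_intq[OF p one_T c] Q_intq[OF pB one_T c] domB[OF one_T p c]])
  also have "\<dots> \<le> (LINT \<omega>|M. Q 1 piB (H 1 \<omega>, piB 1 (H 1 \<omega>)))"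
    using backward one_T c by blast
  also have "\<dots> = welfare M T d Y S piB"
    unfolding welfare_pvalue by (rule pvalue_Q[OF pB one_T, symmetric])
  finally show ?thesis .
qed

lemma regret_le: "regret M T d Y S Pol pol \<le> welfare M T d Y S piB - welfare M T d Y S pol"
proof -
  have "(SUP p\<in>{p. \<forall>t\<in>{1..T}. p t \<in> Pol t}. welfare M T d Y S p) \<le> welfare M T d Y S piB"
  proof (rule cSUP_least)
    show "{p. \<forall>t\<in>{1..T}. p t \<in> Pol t} \<noteq> {}" using pol by auto
    fix p assume "p \<in> {p. \<forall>t\<in>{1..T}. p t \<in> Pol t}"
    then show "welfare M T d Y S p \<le> welfare M T d Y S piB" by (intro W_le) (simp add: PP_def)
  qed
  then show ?thesis by (simp add: regret_def)
qed

definition "Dl t = (LINT \<omega>|M. Q t piB (H t \<omega>, piB t (H t \<omega>)) - Q t pol (H t \<omega>, pol t (H t \<omega>)))"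

lemma Dl_split:
  assumes t: "t \<in> {1..T}"
  shows "Dl t = (LINT \<omega>|M. Q t piB (H t \<omega>, piB t (H t \<omega>))) - (LINT \<omega>|M. Q t pol (H t \<omega>, pol t (H t \<omega>)))"
  unfolding Dl_def
  by (rule Bochner_Integration.integral_diff[OF Q_intq[OF pB t PP_pol[OF pB t]] Q_intq[OF pol_PP t PP_pol[OF pol_PP t]]])

lemma D1: "welfare M T d Y S piB - welfare M T d Y S pol = Dl 1"
  by (simp only: Dl_split[OF one_T] welfare_pvalue pvalue_Q[OF pB one_T] pvalue_Q[OF pol_PP one_T])

lemma Dnn: "t \<in> {2..T} \<Longrightarrow> 0 \<le> Dl t"
  unfolding Dl_def using optB[OF _ pol_PP, of t] by (intro integral_nonneg_AE) (auto elim: AE_mp)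

lemma psi_nonneg: "0 \<le> psi t c (\<lambda>_. 1) z"
  using eta by (auto simp: psi_def wq_def)

lemma Dstep:
  assumes t: "t \<in> {1..T}"
  shows "Dl t \<le> stage_regret M T d A Y S pol t (piB t) + (if t < T then Dl (Suc t) / \<eta> else 0)"
proof -
  define p' where "p' = pol(t := piB t)"
  have cB: "piB t \<in> Pol t" by (rule PP_pol[OF pB t])
  have cP: "pol t \<in> Pol t" by (rule PP_pol[OF pol_PP t])
  have p': "p' \<in> PP" using pol_PP cB by (auto simp: PP_def p'_def)
  have "stage_regret M T d A Y S pol t (piB t) = (LINT \<omega>|M. Q t p' (H t \<omega>, piB t (H t \<omega>))) - (LINT \<omega>|M. Q t pol (H t \<omega>, pol t (H t \<omega>)))"
    by (simp add: stage_regret_def p'_def[symmetric] pvalue_Q[OF p' t] pvalue_Q[OF pol_PP t]) (simp add: p'_def)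
  also have "(LINT \<omega>|M. Q t p' (H t \<omega>, piB t (H t \<omega>))) = (LINT \<omega>|M. Q t pol (H t \<omega>, piB t (H t \<omega>)))"
    using future[OF p' pol_PP t _ cB] Q_mq[OF p' t cB] Q_mq[OF pol_PP t cB] t
    by (intro integral_cong_AE) (auto simp: p'_def)
  finally have R: "stage_regret M T d A Y S pol t (piB t) = (LINT \<omega>|M. Q t pol (H t \<omega>, piB t (H t \<omega>))) - (LINT \<omega>|M. Q t pol (H t \<omega>, pol t (H t \<omega>)))" .
  have X: "Dl t - stage_regret M T d A Y S pol t (piB t) = (LINT \<omega>|M. Q t piB (H t \<omega>, piB t (H t \<omega>))) - (LINT \<omega>|M. Q t pol (H t \<omega>, piB t (H t \<omega>)))"
    using R Dl_split[OF t] by simp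
  show ?thesis
  proof (cases "t < T")
    case False
    have "(LINT \<omega>|M. Q t piB (H t \<omega>, piB t (H t \<omega>))) = (LINT \<omega>|M. Q t pol (H t \<omega>, piB t (H t \<omega>)))"
      using future[OF pB pol_PP t _ cB] Q_mq[OF pB t cB] Q_mq[OF pol_PP t cB] False
      by (intro integral_cong_AE) auto
    then show ?thesis using X False by simp
  next
    case True
    have t1: "Suc t \<in> {1..T}" and t2: "Suc t \<in> {2..T}" using True t by auto
    define g where "g z = Q t piB z - Q t pol z" for z
    have gm: "g \<in> borel_measurable (HS t \<Otimes>\<^sub>M count_space UNIV)"
      unfolding g_def[abs_def] using Q_m[OF pB t] Q_m[OF pol_PP t] by measurable
    have gi: "integrable M (\<lambda>\<omega>. g (H t \<omega>, A t \<omega>))"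
      unfolding g_def using Q_intA[OF pB t] Q_intA[OF pol_PP t] by simp
    define \<rho> where "\<rho> = psi t (piB t) (\<lambda>_. 1)"
    have \<rho>m: "\<rho> \<in> borel_measurable (HS t \<Otimes>\<^sub>M count_space UNIV)" unfolding \<rho>_def by (rule psi_m[OF t cB]) simp
    have \<rho>b: "\<And>z. z \<in> space (HS t \<Otimes>\<^sub>M count_space UNIV) \<Longrightarrow> \<bar>\<rho> z\<bar> \<le> 1 / \<eta>"
      unfolding \<rho>_def by (rule psi_bound) auto
    have \<rho>H: "(\<lambda>\<omega>. \<rho> (H t \<omega>, A t \<omega>)) \<in> borel_measurable M" by (rule measurable_compose[OF HA_m[OF t] \<rho>m])
    have \<rho>Hb: "\<And>\<omega>. \<omega> \<in> space M \<Longrightarrow> \<bar>\<rho> (H t \<omega>, A t \<omega>)\<bar> \<le> 1 / \<eta>"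
      using \<rho>b measurable_space[OF HA_m[OF t]] by auto
    define \<Delta> where "\<Delta> \<omega> = Q (Suc t) piB (H (Suc t) \<omega>, piB (Suc t) (H (Suc t) \<omega>)) - Q (Suc t) pol (H (Suc t) \<omega>, pol (Suc t) (H (Suc t) \<omega>))" for \<omega>
    have \<Delta>i: "integrable M \<Delta>" unfolding \<Delta>_def
      using Q_intq[OF pB t1 PP_pol[OF pB t1]] Q_intq[OF pol_PP t1 PP_pol[OF pol_PP t1]] by simp
    have \<Delta>nn: "AE \<omega> in M. 0 \<le> \<Delta> \<omega>" unfolding \<Delta>_def using optB[OF t2 pol_PP] by eventually_elim simp
    have "(LINT \<omega>|M. Q t piB (H t \<omega>, piB t (H t \<omega>))) - (LINT \<omega>|M. Q t pol (H t \<omega>, piB t (H t \<omega>)))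
        = (LINT \<omega>|M. g (H t \<omega>, piB t (H t \<omega>)))"
      unfolding g_def by (rule Bochner_Integration.integral_diff[symmetric, OF Q_intq[OF pB t cB] Q_intq[OF pol_PP t cB]])
    also have "\<dots> = (LINT \<omega>|M. g (H t \<omega>, A t \<omega>) * wt t (piB t) \<omega>)"
      by (rule IW_real[OF t cB gm gi])
    also have "\<dots> = (LINT \<omega>|M. \<rho> (H t \<omega>, A t \<omega>) * Q t piB (H t \<omega>, A t \<omega>) - \<rho> (H t \<omega>, A t \<omega>) * Q t pol (H t \<omega>, A t \<omega>))"
    proof (rule integral_cong_AE)
      show "(\<lambda>\<omega>. g (H t \<omega>, A t \<omega>) * wt t (piB t) \<omega>) \<in> borel_measurable M"
        using gi wt_m[OF t cB] by (intro borel_measurable_times) (auto dest: borel_measurable_integrable)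
      show "(\<lambda>\<omega>. \<rho> (H t \<omega>, A t \<omega>) * Q t piB (H t \<omega>, A t \<omega>) - \<rho> (H t \<omega>, A t \<omega>) * Q t pol (H t \<omega>, A t \<omega>)) \<in> borel_measurable M"
        using \<rho>H Q_intA[OF pB t] Q_intA[OF pol_PP t] by (auto dest: borel_measurable_integrable)
      show "AE \<omega> in M. g (H t \<omega>, A t \<omega>) * wt t (piB t) \<omega> = \<rho> (H t \<omega>, A t \<omega>) * Q t piB (H t \<omega>, A t \<omega>) - \<rho> (H t \<omega>, A t \<omega>) * Q t pol (H t \<omega>, A t \<omega>)"
        using ov[OF t cB] by eventually_elim (auto simp: g_def wt_def \<rho>_def psi_def wq_def algebra_simps)
    qed
    also have "\<dots> = (LINT \<omega>|M. \<rho> (H t \<omega>, A t \<omega>) * Q t piB (H t \<omega>, A t \<omega>)) - (LINT \<omega>|M. \<rho> (H t \<omega>, A t \<omega>) * Q t pol (H t \<omega>, A t \<omega>))"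
      by (rule Bochner_Integration.integral_diff[OF integrable_bounded_mult[OF Q_intA[OF pB t] \<rho>H \<rho>Hb] integrable_bounded_mult[OF Q_intA[OF pol_PP t] \<rho>H \<rho>Hb]])
    also have "\<dots> = (LINT \<omega>|M. \<rho> (H t \<omega>, A t \<omega>) * Xt piB t \<omega>) - (LINT \<omega>|M. \<rho> (H t \<omega>, A t \<omega>) * Xt pol t \<omega>)"
      by (simp add: Q_bounded[OF pB t \<rho>m \<rho>b] Q_bounded[OF pol_PP t \<rho>m \<rho>b])
    also have "\<dots> = (LINT \<omega>|M. \<rho> (H t \<omega>, A t \<omega>) * Xt piB t \<omega> - \<rho> (H t \<omega>, A t \<omega>) * Xt pol t \<omega>)"
      by (rule Bochner_Integration.integral_diff[symmetric, OF integrable_bounded_mult[OF Xt_int[OF pB t] \<rho>H \<rho>Hb] integrable_bounded_mult[OF Xt_int[OF pol_PP t] \<rho>H \<rho>Hb]])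
    also have "\<dots> = (LINT \<omega>|M. \<rho> (H t \<omega>, A t \<omega>) * \<Delta> \<omega>)"
      by (rule Bochner_Integration.integral_cong[OF refl]) (simp add: Xt_def \<Delta>_def True algebra_simps)
    also have "\<dots> \<le> (LINT \<omega>|M. (1 / \<eta>) * \<Delta> \<omega>)"
    proof (rule integral_mono_AE)
      show "integrable M (\<lambda>\<omega>. \<rho> (H t \<omega>, A t \<omega>) * \<Delta> \<omega>)" by (rule integrable_bounded_mult[OF \<Delta>i \<rho>H \<rho>Hb])
      show "integrable M (\<lambda>\<omega>. (1 / \<eta>) * \<Delta> \<omega>)" using \<Delta>i by simp
      show "AE \<omega> in M. \<rho> (H t \<omega>, A t \<omega>) * \<Delta> \<omega> \<le> (1 / \<eta>) * \<Delta> \<omega>"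
        using \<Delta>nn AE_space
      proof eventually_elim
        case (elim \<omega>)
        have "\<rho> (H t \<omega>, A t \<omega>) \<le> 1 / \<eta>" using \<rho>Hb[OF elim(2)] by simp
        then show ?case using elim(1) by (rule mult_right_mono)
      qed
    qed
    also have "\<dots> = Dl (Suc t) / \<eta>" by (simp add: Dl_def \<Delta>_def)
    finally show ?thesis using X True by simp
  qed
qed

theorem main:
  "regret M T d Y S Pol pol
     \<le> stage_regret M T d A Y S pol 1 (piB 1)
       + (\<Sum>t\<in>{2..T}. (2 ^ (t - 2) / \<eta> ^ (t - 1)) * stage_regret M T d A Y S pol t (piB t))"
proof -
  have "Dl 1 \<le> stage_regret M T d A Y S pol 1 (piB 1)
       + (\<Sum>t\<in>{2..T}. (2 ^ (t - 2) / \<eta> ^ (t - 1)) * stage_regret M T d A Y S pol t (piB t))"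
    by (rule unroll[OF eta(1) T Dnn Dstep])
  then show ?thesis using regret_le D1 by simp
qed

end

theorem lemma9:
  fixes M :: "'a measure" and SS :: "'S measure" and T :: nat and d :: "nat \<Rightarrow> nat"
    and A :: "nat \<Rightarrow> 'a \<Rightarrow> nat"
    and S :: "nat \<Rightarrow> nat list \<Rightarrow> 'a \<Rightarrow> 'S"
    and Y :: "nat \<Rightarrow> nat list \<Rightarrow> 'a \<Rightarrow> real"
    and Pol :: "nat \<Rightarrow> ('S hist \<Rightarrow> nat) set"
    and e :: "nat \<Rightarrow> 'S hist \<Rightarrow> nat \<Rightarrow> real"
    and Q :: "nat \<Rightarrow> (nat \<Rightarrow> 'S hist \<Rightarrow> nat) \<Rightarrow> 'S hist \<times> nat \<Rightarrow> real"
    and \<eta> :: real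
    and pol piB :: "nat \<Rightarrow> 'S hist \<Rightarrow> nat"
  assumes M: "prob_space M"
    and T: "1 \<le> T"
    and A_meas: "\<forall>t\<in>{1..T}. A t \<in> measurable M (count_space UNIV) \<and> (\<forall>\<omega>\<in>space M. A t \<omega> < d t)"
    and S_meas: "\<forall>t\<in>{1..T}. \<forall>bs\<in>act_seqs d (t - 1). S t bs \<in> measurable M SS"
    and Y_int: "\<forall>t\<in>{1..T}. \<forall>bs\<in>act_seqs d t. integrable M (Y t bs)"
    and Pi_policies: "\<forall>t\<in>{1..T}. \<forall>p\<in>Pol t. p \<in> measurable (hist_space SS t) (count_space UNIV)
                        \<and> (\<forall>h\<in>space (hist_space SS t). p h < d t)"
    and seq_ign: "\<forall>t\<in>{1..T}. \<forall>a\<in>act_seqs d T.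
        cond_indep M (PiM {t..T} (\<lambda>_. borel) \<Otimes>\<^sub>M PiM {Suc t..T} (\<lambda>_. SS))
          (\<lambda>\<omega>. ((\<lambda>s\<in>{t..T}. Y s (take s a) \<omega>), (\<lambda>s\<in>{Suc t..T}. S s (take (s - 1) a) \<omega>)))
          (count_space UNIV) (A t) (hist_space SS t) (obs_hist A S t)"
    and e_version: "\<forall>t\<in>{1..T}. \<forall>a. cexp_version M (hist_space SS t) (obs_hist A S t)
                        (\<lambda>\<omega>. indicator {\<omega>. A t \<omega> = a} \<omega>) (\<lambda>h. e t h a)"
    and eta: "0 < \<eta>" "\<eta> < 1"
    and overlap: "\<forall>t\<in>{1..T}. \<forall>p\<in>Pol t. AE \<omega> in M. \<eta> \<le> e t (obs_hist A S t \<omega>) (p (obs_hist A S t \<omega>))"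
    and Q_version: "\<forall>p. (\<forall>t\<in>{1..T}. p t \<in> Pol t) \<longrightarrow>
        cexp_version M (hist_space SS T \<Otimes>\<^sub>M count_space UNIV) (\<lambda>\<omega>. (obs_hist A S T \<omega>, A T \<omega>))
          (obs_out A Y T) (Q T p) \<and>
        (\<forall>t\<in>{1..<T}. cexp_version M (hist_space SS t \<Otimes>\<^sub>M count_space UNIV) (\<lambda>\<omega>. (obs_hist A S t \<omega>, A t \<omega>))
          (\<lambda>\<omega>. obs_out A Y t \<omega> + Q (Suc t) p (obs_hist A S (Suc t) \<omega>, p (Suc t) (obs_hist A S (Suc t) \<omega>)))
          (Q t p))"
    and backward: "\<forall>t\<in>{1..T}. piB t \<in> Pol t \<and>
        (\<forall>p\<in>Pol t. (LINT \<omega>|M. Q t piB (obs_hist A S t \<omega>, p (obs_hist A S t \<omega>)))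
                 \<le> (LINT \<omega>|M. Q t piB (obs_hist A S t \<omega>, piB t (obs_hist A S t \<omega>))))"
    and correct_spec: "\<exists>piS. (\<forall>t\<in>{1..T}. piS t \<in> Pol t) \<and>
        (\<forall>t\<in>{2..T}. AE \<omega> in M. \<forall>p\<in>Pol t.
            Q t piS (obs_hist A S t \<omega>, p (obs_hist A S t \<omega>))
              \<le> Q t piS (obs_hist A S t \<omega>, piS t (obs_hist A S t \<omega>)))"
    and pol: "\<forall>t\<in>{1..T}. pol t \<in> Pol t"
  shows "regret M T d Y S Pol pol
           \<le> stage_regret M T d A Y S pol 1 (piB 1)
             + (\<Sum>t\<in>{2..T}. (2 ^ (t - 2) / \<eta> ^ (t - 1)) * stage_regret M T d A Y S pol t (piB t))"
proof -
  interpret dtr M SS T d A S Y Pol e Q \<eta> pol piB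
    by (rule dtr.intro[OF assms])
  show ?thesis by (rule main)
qed

end
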